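(* Consider the generalized trimmed lasso problem $$\min_{x_0,\ldots,x_L}\ f(x_0,x_1,\ldots,x_L)+\sum_{l=1}^L\gamma_l T_{K_l,m_l,p_l}(D_lx_l-c_l)$$ with $f:\mathbb{R}^{n_0+\cdots+n_L}\to\mathbb{R}$ directionally differentiable, and let $x^*=(x_0^*,\ldots,x_L^* )$ be a d-stationary point. Fix $l\in[L]$ and suppose: (A1) there is $\overline{x}_l\in\mathbb{R}^{n_l}$ with $D_l\overline{x}_l-c_l=0$; (A2) there is $\Gamma_l>0$ with $\sup_{d_l\in\mathbb{R}^{n_l},\|d_l\|_2=1}f'(x^*;(0,\ldots,0,d_l,0,\ldots,0))\le\Gamma_l$ (where $d_l$ sits in the $l$-th block). If $\gamma_l>\Gamma_l/\sigma_{K_l,m_l,p_l}(D_l)$, then $T_{K_l,m_l,p_l}(D_lx_l^*-c_l)=0$. Moreover, in the case $p_l=1$, $D_l=I$ (so $m_l=n_l$), $c_l=0$, and $f(x_0,\ldots,x_L)=g(x_0,\ldots,x_L)+\sum_{k\in[L]}\eta_k\|x_k\|_1$ with $\eta_k\ge0$ and $g$ real-valued and directionally differentiable, the same conclusion $T_{K_l,n_l,1}(x_l^* )=0$ holds whenever $\gamma_l>\Gamma_l$, where now $\Gamma_l$ is any real number with $$\sup_{d_l\in\{-1,0,1\}^{n_l},\ \|d_l\|_1=1} g'(x^*;(0,\ldots,d_l,\ldots,0))-\eta_l\le\Gamma_l.$$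
   Context: Trimmed $\ell_1$ norm: for $z=(z_1^\top,\ldots,z_m^\top)^\top\in\mathbb{R}^{mp}$, $z_i\in\mathbb{R}^p$, $K\in\{0,\ldots,m-1\}$: $T_{K,m,p}(z)=\min_{\Lambda\subset[m],|\Lambda|=m-K}\sum_{i\in\Lambda}\|z_i\|_2$. Problem data: $n_0\ge0$, $\gamma_l>0$, $K_l\in\{0,\ldots,m_l-1\}$, $c_l\in\mathbb{R}^{m_lp_l}$, $D_l\ne0$ an $m_lp_l\times n_l$ matrix. Directional derivative $h'(x;d)=\lim_{\varsigma\searrow0}(h(x+\varsigma d)-h(x))/\varsigma$; a function is directionally differentiable if this exists in $\mathbb{R}$ everywhere on its domain in feasible directions; $x^*$ is d-stationary if the directional derivative of the whole objective at $x^*$ is $\ge0$ in every direction. For a matrix $A\neq0$, $\sigma_{\min}(A)$ is its smallest nonzero singular value. For $D=((D)_1^\top,\ldots,(D)_m^\top)^\top\ne0$ with blocks $(D)_i\in\mathbb{R}^{p\times n}$ and $\Lambda\subset[m]$, $(D)_\Lambda$ is the submatrix formed by the blocks $(D)_i$, $i\in\Lambda$; define $\sigma_{K,m,p}(D)=\sigma_{\min}(D)$ if $D$ is surjective, and otherwise $\sigma_{K,m,p}(D)=\min\{\sigma_{\min}((D)_\Lambda)\mid \Lambda\subset[m],|\Lambda|=m-K,(D)_\Lambda\ne0\}$. *)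

theory Defs
  imports Complex_Main "Jordan_Normal_Form.Char_Poly" "Jordan_Normal_Form.DL_Submatrix"
begin

(* Whole variable x = (x_0,...,x_L) in R^(n_0+...+n_L) is a real vec of dimension tot_dim n L.
   Block l occupies coordinates off n l, ..., off n l + n l - 1. *)
definition off :: "(nat \<Rightarrow> nat) \<Rightarrow> nat \<Rightarrow> nat" where
  "off n l = (\<Sum>k<l. n k)"

definition tot_dim :: "(nat \<Rightarrow> nat) \<Rightarrow> nat \<Rightarrow> nat" where
  "tot_dim n L = (\<Sum>k\<le>L. n k)"

definition blk :: "(nat \<Rightarrow> nat) \<Rightarrow> nat \<Rightarrow> real vec \<Rightarrow> real vec" where
  "blk n l x = vec (n l) (\<lambda>i. x $ (off n l + i))"

definition emb :: "(nat \<Rightarrow> nat) \<Rightarrow> nat \<Rightarrow> nat \<Rightarrow> real vec \<Rightarrow> real vec" where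
  "emb n L l d = vec (tot_dim n L)
     (\<lambda>j. if off n l \<le> j \<and> j < off n l + n l then d $ (j - off n l) else 0)"

definition norm2 :: "real vec \<Rightarrow> real" where
  "norm2 v = sqrt (\<Sum>i<dim_vec v. (v $ i)\<^sup>2)"

definition norm1 :: "real vec \<Rightarrow> real" where
  "norm1 v = (\<Sum>i<dim_vec v. \<bar>v $ i\<bar>)"

(* Euclidean norm of the i-th block z_i in R^p of z in R^(m p) *)
definition bnorm :: "nat \<Rightarrow> real vec \<Rightarrow> nat \<Rightarrow> real" where
  "bnorm p z i = sqrt (\<Sum>j<p. (z $ (i * p + j))\<^sup>2)"

definition trimmed :: "nat \<Rightarrow> nat \<Rightarrow> nat \<Rightarrow> real vec \<Rightarrow> real" where
  "trimmed K m p z = Min ((\<lambda>\<Lambda>. \<Sum>i\<in>\<Lambda>. bnorm p z i) ` {\<Lambda>. \<Lambda> \<subseteq> {..<m} \<and> card \<Lambda> = m - K})"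

definition has_dir_deriv :: "(real vec \<Rightarrow> real) \<Rightarrow> real vec \<Rightarrow> real vec \<Rightarrow> real \<Rightarrow> bool" where
  "has_dir_deriv h x d D \<longleftrightarrow> ((\<lambda>t. (h (x + t \<cdot>\<^sub>v d) - h x) / t) \<longlongrightarrow> D) (at_right 0)"

definition dir_deriv :: "(real vec \<Rightarrow> real) \<Rightarrow> real vec \<Rightarrow> real vec \<Rightarrow> real" where
  "dir_deriv h x d = Lim (at_right 0) (\<lambda>t. (h (x + t \<cdot>\<^sub>v d) - h x) / t)"

definition dir_differentiable :: "nat \<Rightarrow> (real vec \<Rightarrow> real) \<Rightarrow> bool" where
  "dir_differentiable N h \<longleftrightarrow>
     (\<forall>x\<in>carrier_vec N. \<forall>d\<in>carrier_vec N. \<exists>D. has_dir_deriv h x d D)"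

definition d_stationary :: "nat \<Rightarrow> (real vec \<Rightarrow> real) \<Rightarrow> real vec \<Rightarrow> bool" where
  "d_stationary N h x \<longleftrightarrow> x \<in> carrier_vec N \<and>
     (\<forall>d\<in>carrier_vec N. (\<exists>D. has_dir_deriv h x d D) \<and> dir_deriv h x d \<ge> 0)"

definition singular_values :: "real mat \<Rightarrow> real set" where
  "singular_values A = {sqrt e | e. eigenvalue (transpose_mat A * A) e}"

definition sigma_min :: "real mat \<Rightarrow> real" where
  "sigma_min A = Min {s \<in> singular_values A. s \<noteq> 0}"

definition surjective_mat :: "real mat \<Rightarrow> bool" where
  "surjective_mat A \<longleftrightarrow>
     (\<forall>y\<in>carrier_vec (dim_row A). \<exists>x\<in>carrier_vec (dim_col A). A *\<^sub>v x = y)"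

(* (D)_\<Lambda>: rows of the blocks (D)_i, i in \<Lambda>, each block having p rows *)
definition block_rows :: "nat \<Rightarrow> real mat \<Rightarrow> nat set \<Rightarrow> real mat" where
  "block_rows p D \<Lambda> = submatrix D {r. r div p \<in> \<Lambda>} UNIV"

definition nonzero_mat :: "real mat \<Rightarrow> bool" where
  "nonzero_mat A \<longleftrightarrow> A \<noteq> 0\<^sub>m (dim_row A) (dim_col A)"

definition sigma_K :: "nat \<Rightarrow> nat \<Rightarrow> nat \<Rightarrow> real mat \<Rightarrow> real" where
  "sigma_K K m p D = (if surjective_mat D then sigma_min D
     else Min {sigma_min (block_rows p D \<Lambda>) | \<Lambda>.
                 \<Lambda> \<subseteq> {..<m} \<and> card \<Lambda> = m - K \<and> nonzero_mat (block_rows p D \<Lambda>)})"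

definition objective ::
  "nat \<Rightarrow> (nat \<Rightarrow> nat) \<Rightarrow> (nat \<Rightarrow> nat) \<Rightarrow> (nat \<Rightarrow> nat) \<Rightarrow> (nat \<Rightarrow> nat) \<Rightarrow> (nat \<Rightarrow> real)
   \<Rightarrow> (nat \<Rightarrow> real vec) \<Rightarrow> (nat \<Rightarrow> real mat) \<Rightarrow> (real vec \<Rightarrow> real) \<Rightarrow> real vec \<Rightarrow> real" where
  "objective L n m p K \<gamma> c D f x =
     f x + (\<Sum>k\<in>{1..L}. \<gamma> k * trimmed (K k) (m k) (p k) (D k *\<^sub>v blk n k x - c k))"

end

theory Submission
  imports Defs "HOL-Analysis.Function_Topology"
begin


section \<open>Compactness/minimization on vectors\<close>

lemma vec_index_out: "\<not> i < n \<Longrightarrow> vec n f $ i = vec n g $ i"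
  by transfer (simp add: mk_vec_def)

lemma cont_vec_index: "continuous_on UNIV (\<lambda>f. vec n f $ i :: real)"
proof (cases "i < n")
  case True
  then show ?thesis by (simp add: continuous_on_product_coordinates)
next
  case False
  then have "(\<lambda>f. vec n f $ i) = (\<lambda>f. vec n (\<lambda>_. 0::real) $ i)"
    using vec_index_out by blast
  then show ?thesis by (metis continuous_on_const)
qed

lemma compact_box: "compact (Pi\<^sub>E (UNIV::nat set) (\<lambda>i. {-R..R::real}))"
proof -
  have "compactin (product_topology (\<lambda>i. euclidean) (UNIV::nat set)) (Pi\<^sub>E UNIV (\<lambda>i. {-R..R::real}))"
    by (simp add: compactin_PiE)
  then show ?thesis by (simp add: euclidean_product_topology)
qed

lemma closed_Collect_all_imp:
  assumes "\<And>i. Q i \<Longrightarrow> closed {f. P i f}"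
  shows "closed {f. \<forall>i. Q i \<longrightarrow> P i f}"
proof -
  have "{f. \<forall>i. Q i \<longrightarrow> P i f} = (\<Inter>i\<in>{i. Q i}. {f. P i f})" by auto
  then show ?thesis using assms by (auto intro: closed_INT)
qed

lemma vec_attains_min:
  fixes S :: "real vec set" and \<phi> :: "real vec \<Rightarrow> real"
  assumes S: "S \<subseteq> carrier_vec n" and v0: "v0 \<in> S"
    and bnd: "\<And>v i. v \<in> S \<Longrightarrow> i < n \<Longrightarrow> \<bar>v $ i\<bar> \<le> R"
    and cl: "closed {f. vec n f \<in> S \<and> (\<forall>i. n \<le> i \<longrightarrow> f i = 0)}"
    and co: "continuous_on UNIV (\<lambda>f. \<phi> (vec n f))"
  shows "\<exists>v\<in>S. \<forall>u\<in>S. \<phi> v \<le> \<phi> u"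
proof -
  define C where "C = {f. vec n f \<in> S \<and> (\<forall>i. n \<le> i \<longrightarrow> f i = 0)}"
  define G where "G = (\<lambda>v::real vec. \<lambda>i. if i < n then v $ i else 0)"
  have vG: "vec n (G v) = v" if "v \<in> S" for v
  proof (rule eq_vecI)
    show "dim_vec (vec n (G v)) = dim_vec v" using S that by auto
    fix i assume "i < dim_vec v"
    then have "i < n" using S that by auto
    then show "vec n (G v) $ i = v $ i" unfolding G_def by simp
  qed
  have GC: "G v \<in> C" if "v \<in> S" for v
  proof -
    have "vec n (G v) \<in> S" using vG[OF that] that by simp
    moreover have "\<forall>i. n \<le> i \<longrightarrow> G v i = 0" unfolding G_def by simp
    ultimately show ?thesis unfolding C_def by blast
  qed
  have sub: "C \<subseteq> Pi\<^sub>E UNIV (\<lambda>i. {-\<bar>R\<bar>..\<bar>R\<bar>})"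
  proof
    fix f assume f: "f \<in> C"
    show "f \<in> Pi\<^sub>E UNIV (\<lambda>i. {-\<bar>R\<bar>..\<bar>R\<bar>})"
    unfolding PiE_UNIV_domain proof (rule Pi_I)
      fix i
      show "f i \<in> {-\<bar>R\<bar>..\<bar>R\<bar>}"
      proof -
        have "\<bar>f i\<bar> \<le> \<bar>R\<bar>"
        proof (cases "i < n")
          case True
          then have "\<bar>vec n f $ i\<bar> \<le> R" using bnd[of "vec n f" i] f unfolding C_def by auto
          then show ?thesis using True by auto
        next
          case False then show ?thesis using f unfolding C_def by auto
        qed
        then show ?thesis by auto
      qed
    qed
  qed
  have "compact C"
  proof -
    have "compact (Pi\<^sub>E UNIV (\<lambda>i. {-\<bar>R\<bar>..\<bar>R\<bar>}) \<inter> C)"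
      by (rule compact_Int_closed[OF compact_box]) (use cl in \<open>simp add: C_def\<close>)
    moreover have "Pi\<^sub>E UNIV (\<lambda>i. {-\<bar>R\<bar>..\<bar>R\<bar>}) \<inter> C = C" using sub by auto
    ultimately show ?thesis by simp
  qed
  moreover have "C \<noteq> {}" using GC[OF v0] by blast
  moreover have "continuous_on C (\<lambda>f. \<phi> (vec n f))" by (rule continuous_on_subset[OF co]) simp
  ultimately obtain f0 where f0: "f0 \<in> C" "\<And>g. g \<in> C \<Longrightarrow> \<phi> (vec n f0) \<le> \<phi> (vec n g)"
    by (metis continuous_attains_inf)
  show ?thesis
  proof (intro bexI ballI)
    show "vec n f0 \<in> S" using f0(1) unfolding C_def by simp
    fix u assume u: "u \<in> S"
    have "\<phi> (vec n f0) \<le> \<phi> (vec n (G u))" by (rule f0(2)[OF GC[OF u]])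
    then show "\<phi> (vec n f0) \<le> \<phi> u" using vG[OF u] by simp
  qed
qed



definition cvec :: "nat \<Rightarrow> ((nat \<Rightarrow> real) \<Rightarrow> real vec) \<Rightarrow> bool" where
  "cvec n F \<longleftrightarrow> (\<forall>f. F f \<in> carrier_vec n) \<and> (\<forall>i<n. continuous_on UNIV (\<lambda>f. F f $ i))"

lemma cvec_vec: "cvec n (\<lambda>f. vec n f)"
  unfolding cvec_def using cont_vec_index by auto

lemma cvec_const: "c \<in> carrier_vec n \<Longrightarrow> cvec n (\<lambda>_. c)"
  unfolding cvec_def by auto

lemma cont_sprod:
  assumes F: "cvec n F" and G: "cvec n G"
  shows "continuous_on UNIV (\<lambda>f. F f \<bullet> G f)"
proof -
  have d: "dim_vec (G f) = n" for f using G unfolding cvec_def carrier_vec_def by auto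
  have eq: "(\<lambda>f. F f \<bullet> G f) = (\<lambda>f. \<Sum>i\<in>{0..<n}. F f $ i * G f $ i)"
    unfolding scalar_prod_def d by simp
  show ?thesis unfolding eq
    by (intro continuous_on_sum continuous_on_mult) (use F G in \<open>auto simp: cvec_def\<close>)
qed

lemma cvec_mult:
  assumes A: "A \<in> carrier_mat r n" and F: "cvec n F"
  shows "cvec r (\<lambda>f. A *\<^sub>v F f)"
  unfolding cvec_def
proof (intro conjI allI impI)
  fix f show "A *\<^sub>v F f \<in> carrier_vec r" by (rule carrier_vecI) (use A in auto)
next
  fix i assume i: "i < r"
  have eq: "(\<lambda>f. (A *\<^sub>v F f) $ i) = (\<lambda>f. row A i \<bullet> F f)" using A i by auto
  have "cvec n (\<lambda>_. row A i)" by (rule cvec_const) (use A in auto)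
  then show "continuous_on UNIV (\<lambda>f. (A *\<^sub>v F f) $ i)"
    unfolding eq by (rule cont_sprod[OF _ F])
qed

lemma norm2_sprod: "norm2 v = sqrt (v \<bullet> v)"
  unfolding norm2_def scalar_prod_def by (simp add: power2_eq_square atLeast0LessThan)

lemma sprod_self_nonneg: "(v::real vec) \<bullet> v \<ge> 0"
  unfolding scalar_prod_def by (auto intro: sum_nonneg)

lemma sprod_self_zero:
  assumes v: "(v::real vec) \<in> carrier_vec n" and z: "v \<bullet> v = 0"
  shows "v = 0\<^sub>v n"
proof (rule eq_vecI)
  show "dim_vec v = dim_vec (0\<^sub>v n)" using v by simp
  fix i assume "i < dim_vec (0\<^sub>v n)"
  then have i: "i \<in> {0..<dim_vec v}" using v by auto
  have "\<forall>j\<in>{0..<dim_vec v}. v $ j * v $ j = 0"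
    using z unfolding scalar_prod_def by (subst sum_nonneg_eq_0_iff[symmetric]) auto
  then show "v $ i = 0\<^sub>v n $ i" using i v by auto
qed

lemma comp_sq_le:
  assumes v: "(v::real vec) \<in> carrier_vec n" and i: "i < n"
  shows "(v $ i)\<^sup>2 \<le> v \<bullet> v"
proof -
  have "v \<bullet> v = (\<Sum>j\<in>{0..<n}. v $ j * v $ j)" using v unfolding scalar_prod_def by auto
  moreover have "v $ i * v $ i \<le> (\<Sum>j\<in>{0..<n}. v $ j * v $ j)"
    by (rule member_le_sum) (use i in auto)
  ultimately show ?thesis by (simp add: power2_eq_square)
qed

lemma sprod_expand:
  assumes u: "(u::real vec) \<in> carrier_vec n" and v: "v \<in> carrier_vec n"
  shows "(u + t \<cdot>\<^sub>v v) \<bullet> (u + t \<cdot>\<^sub>v v) = u \<bullet> u + 2 * t * (u \<bullet> v) + t\<^sup>2 * (v \<bullet> v)"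
proof -
  have "(u + t \<cdot>\<^sub>v v) \<bullet> (u + t \<cdot>\<^sub>v v) = (\<Sum>i\<in>{0..<n}. (u $ i + t * v $ i) * (u $ i + t * v $ i))"
    using u v unfolding scalar_prod_def by auto
  also have "\<dots> = (\<Sum>i\<in>{0..<n}. u $ i * u $ i + 2 * t * (u $ i * v $ i) + t\<^sup>2 * (v $ i * v $ i))"
    by (rule sum.cong) (auto simp: algebra_simps power2_eq_square)
  also have "\<dots> = u \<bullet> u + 2 * t * (u \<bullet> v) + t\<^sup>2 * (v \<bullet> v)"
    using u v unfolding scalar_prod_def by (simp add: sum.distrib sum_distrib_left)
  finally show ?thesis .
qed

lemma quad_zero:
  fixes a b :: real
  assumes "\<And>t. 0 \<le> a * t + b * t\<^sup>2"
  shows "a = 0"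
proof (rule ccontr)
  assume a: "a \<noteq> 0"
  define s where "s = 1 / (\<bar>b\<bar> + 1)"
  have s: "s > 0" "b * s < 1"
    unfolding s_def by (auto simp: field_simps)
  have "0 \<le> a * (- a * s) + b * (- a * s)\<^sup>2" by (rule assms)
  also have "\<dots> = a\<^sup>2 * s * (b * s - 1)" by (simp add: algebra_simps power2_eq_square)
  also have "\<dots> < 0"
    using a s by (intro mult_pos_neg) auto
  finally show False by simp
qed


section \<open>Minimum norm solutions and Rayleigh quotient\<close>

lemma closed_zeros: "closed {f::nat\<Rightarrow>real. \<forall>i. n \<le> i \<longrightarrow> f i = 0}"
  by (rule closed_Collect_all_imp) (intro closed_Collect_eq continuous_on_product_coordinates continuous_on_const)

lemma mat_vec_eq_iff:
  fixes A :: "real mat"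
  assumes "A \<in> carrier_mat r n"
  shows "A *\<^sub>v x = A *\<^sub>v y \<longleftrightarrow> (\<forall>i. i < r \<longrightarrow> (A *\<^sub>v x) $ i = (A *\<^sub>v y) $ i)"
proof
  assume "\<forall>i. i < r \<longrightarrow> (A *\<^sub>v x) $ i = (A *\<^sub>v y) $ i"
  then show "A *\<^sub>v x = A *\<^sub>v y" using assms by (intro eq_vecI) auto
qed simp

lemma min_norm_solution:
  fixes A :: "real mat"
  assumes A: "A \<in> carrier_mat r n" and w: "w \<in> carrier_vec n"
  shows "\<exists>d\<in>carrier_vec n. A *\<^sub>v d = A *\<^sub>v w \<and>
           (\<forall>k\<in>carrier_vec n. A *\<^sub>v k = 0\<^sub>v r \<longrightarrow> d \<bullet> k = 0)"
proof -
  define S where "S = {d \<in> carrier_vec n. A *\<^sub>v d = A *\<^sub>v w \<and> d \<bullet> d \<le> w \<bullet> w}"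
  have "\<exists>v\<in>S. \<forall>u\<in>S. v \<bullet> v \<le> u \<bullet> u"
  proof (rule vec_attains_min[of S n w "sqrt (w \<bullet> w)"])
    show "S \<subseteq> carrier_vec n" unfolding S_def by auto
    show "w \<in> S" unfolding S_def using w by auto
    fix v i assume v: "v \<in> S" and i: "i < n"
    have "(v $ i)\<^sup>2 \<le> w \<bullet> w" using comp_sq_le[of v n i] v i unfolding S_def by auto
    then show "\<bar>v $ i\<bar> \<le> sqrt (w \<bullet> w)" using real_le_rsqrt by fastforce
  next
    have cA: "cvec r (\<lambda>f. A *\<^sub>v vec n f)" by (rule cvec_mult[OF A cvec_vec])
    have eq: "{f. vec n f \<in> S \<and> (\<forall>i. n \<le> i \<longrightarrow> f i = 0)} =
      {f. \<forall>i. i < r \<longrightarrow> (A *\<^sub>v vec n f) $ i = (A *\<^sub>v w) $ i} \<inter>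
      {f. vec n f \<bullet> vec n f \<le> w \<bullet> w} \<inter> {f. \<forall>i. n \<le> i \<longrightarrow> f i = 0}"
      unfolding S_def mat_vec_eq_iff[OF A] by auto
    show "closed {f. vec n f \<in> S \<and> (\<forall>i. n \<le> i \<longrightarrow> f i = 0)}"
      unfolding eq
    proof (intro closed_Int closed_zeros)
      show "closed {f. \<forall>i. i < r \<longrightarrow> (A *\<^sub>v vec n f) $ i = (A *\<^sub>v w) $ i}"
        by (rule closed_Collect_all_imp, rule closed_Collect_eq)
          (use cA in \<open>auto simp: cvec_def\<close>)
      show "closed {f. vec n f \<bullet> vec n f \<le> w \<bullet> w}"
        by (rule closed_Collect_le) (auto intro: cont_sprod cvec_vec)
    qed
    show "continuous_on UNIV (\<lambda>f::nat\<Rightarrow>real. vec n f \<bullet> vec n f)" by (rule cont_sprod[OF cvec_vec cvec_vec])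
  qed
  then obtain d where d: "d \<in> S" and dmin: "\<And>u. u \<in> S \<Longrightarrow> d \<bullet> d \<le> u \<bullet> u" by blast
  have dn: "d \<in> carrier_vec n" and dA: "A *\<^sub>v d = A *\<^sub>v w" and dw: "d \<bullet> d \<le> w \<bullet> w"
    using d unfolding S_def by auto
  show ?thesis
  proof (intro bexI conjI ballI impI)
    show "d \<in> carrier_vec n" "A *\<^sub>v d = A *\<^sub>v w" by fact+
    fix k assume k: "k \<in> carrier_vec n" and Ak: "A *\<^sub>v k = 0\<^sub>v r"
    have "0 \<le> (2 * (d \<bullet> k)) * t + (k \<bullet> k) * t\<^sup>2" for t
    proof -
      have exp: "(d + t \<cdot>\<^sub>v k) \<bullet> (d + t \<cdot>\<^sub>v k) = d \<bullet> d + 2 * t * (d \<bullet> k) + t\<^sup>2 * (k \<bullet> k)"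
        by (rule sprod_expand[OF dn k])
      have "d \<bullet> d \<le> (d + t \<cdot>\<^sub>v k) \<bullet> (d + t \<cdot>\<^sub>v k)"
      proof (cases "(d + t \<cdot>\<^sub>v k) \<bullet> (d + t \<cdot>\<^sub>v k) \<le> w \<bullet> w")
        case True
        have "A *\<^sub>v (d + t \<cdot>\<^sub>v k) = A *\<^sub>v d + t \<cdot>\<^sub>v (A *\<^sub>v k)"
          using A dn k by (simp add: mult_add_distrib_mat_vec mult_mat_vec)
        also have "\<dots> = A *\<^sub>v w" using dA Ak A w by auto
        finally have "d + t \<cdot>\<^sub>v k \<in> S" unfolding S_def using True dn k by auto
        then show ?thesis by (rule dmin)
      next
        case False then show ?thesis using dw by auto
      qed
      then show ?thesis using exp by (simp add: algebra_simps)
    qed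
    then have "2 * (d \<bullet> k) = 0" by (rule quad_zero)
    then show "d \<bullet> k = 0" by simp
  qed
qed


definition perpk :: "real mat \<Rightarrow> nat \<Rightarrow> real vec \<Rightarrow> bool" where
  "perpk A n v \<longleftrightarrow> (\<forall>k. k \<in> carrier_vec n \<and> A *\<^sub>v k = 0\<^sub>v (dim_row A) \<longrightarrow> v \<bullet> k = 0)"

lemma perpk_smult:
  assumes "perpk A n v" "v \<in> carrier_vec n"
  shows "perpk A n (c \<cdot>\<^sub>v v)"
  using assms unfolding perpk_def by auto

lemma perpk_add:
  assumes "perpk A n v" "perpk A n u" "v \<in> carrier_vec n" "u \<in> carrier_vec n"
  shows "perpk A n (v + u)"
  using assms unfolding perpk_def by (auto simp: add_scalar_prod_distrib)

lemma rayleigh: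
  fixes A :: "real mat"
  assumes A: "A \<in> carrier_mat r n" and v1: "v1 \<in> carrier_vec n" "v1 \<noteq> 0\<^sub>v n" "perpk A n v1"
  shows "\<exists>\<mu>>0. eigenvalue (transpose_mat A * A) \<mu> \<and>
          (\<forall>v\<in>carrier_vec n. perpk A n v \<longrightarrow> \<mu> * (v \<bullet> v) \<le> (A *\<^sub>v v) \<bullet> (A *\<^sub>v v))"
proof -
  have dA: "dim_row A = r" using A by auto
  define S where "S = {v \<in> carrier_vec n. v \<bullet> v = 1 \<and> perpk A n v}"
  have normalize: "(1 / sqrt (v \<bullet> v)) \<cdot>\<^sub>v v \<in> S" if v: "v \<in> carrier_vec n" "v \<noteq> 0\<^sub>v n" "perpk A n v" for v
  proof -
    have pos: "v \<bullet> v > 0" using sprod_self_nonneg[of v] sprod_self_zero[OF v(1)] v(2) by fastforce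
    have "((1 / sqrt (v \<bullet> v)) \<cdot>\<^sub>v v) \<bullet> ((1 / sqrt (v \<bullet> v)) \<cdot>\<^sub>v v) = (1 / sqrt (v \<bullet> v))\<^sup>2 * (v \<bullet> v)"
      using v by (simp add: power2_eq_square)
    also have "\<dots> = 1" using pos by (simp add: power_divide)
    finally show ?thesis unfolding S_def using v perpk_smult by auto
  qed
  have "\<exists>v\<in>S. \<forall>u\<in>S. (A *\<^sub>v v) \<bullet> (A *\<^sub>v v) \<le> (A *\<^sub>v u) \<bullet> (A *\<^sub>v u)"
  proof (rule vec_attains_min[of S n _ 1])
    show "S \<subseteq> carrier_vec n" unfolding S_def by auto
    show "(1 / sqrt (v1 \<bullet> v1)) \<cdot>\<^sub>v v1 \<in> S" by (rule normalize[OF v1])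
    fix v i assume v: "v \<in> S" and i: "i < n"
    have "(v $ i)\<^sup>2 \<le> 1" using comp_sq_le[of v n i] v i unfolding S_def by auto
    then show "\<bar>v $ i\<bar> \<le> 1" by (simp add: abs_square_le_1)
  next
    have eq: "{f. vec n f \<in> S \<and> (\<forall>i. n \<le> i \<longrightarrow> f i = 0)} =
      {f. vec n f \<bullet> vec n f = 1} \<inter>
      {f. \<forall>k. k \<in> carrier_vec n \<and> A *\<^sub>v k = 0\<^sub>v (dim_row A) \<longrightarrow> vec n f \<bullet> k = 0} \<inter>
      {f. \<forall>i. n \<le> i \<longrightarrow> f i = 0}"
      unfolding S_def perpk_def by auto
    show "closed {f. vec n f \<in> S \<and> (\<forall>i. n \<le> i \<longrightarrow> f i = 0)}"
      unfolding eq
    proof (intro closed_Int closed_zeros)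
      show "closed {f::nat\<Rightarrow>real. vec n f \<bullet> vec n f = 1}"
        by (rule closed_Collect_eq) (auto intro: cont_sprod[OF cvec_vec cvec_vec])
      show "closed {f::nat\<Rightarrow>real. \<forall>k. k \<in> carrier_vec n \<and> A *\<^sub>v k = 0\<^sub>v (dim_row A) \<longrightarrow> vec n f \<bullet> k = 0}"
        by (rule closed_Collect_all_imp, rule closed_Collect_eq)
          (auto intro: cont_sprod[OF cvec_vec cvec_const])
    qed
    show "continuous_on UNIV (\<lambda>f::nat\<Rightarrow>real. (A *\<^sub>v vec n f) \<bullet> (A *\<^sub>v vec n f))"
      by (rule cont_sprod[OF cvec_mult[OF A cvec_vec] cvec_mult[OF A cvec_vec]])
  qed
  then obtain v0 where v0S: "v0 \<in> S" and v0min: "\<And>u. u \<in> S \<Longrightarrow> (A *\<^sub>v v0) \<bullet> (A *\<^sub>v v0) \<le> (A *\<^sub>v u) \<bullet> (A *\<^sub>v u)"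
    by blast
  have v0: "v0 \<in> carrier_vec n" "v0 \<bullet> v0 = 1" "perpk A n v0" using v0S unfolding S_def by auto
  define \<mu> where "\<mu> = (A *\<^sub>v v0) \<bullet> (A *\<^sub>v v0)"
  have hom: "\<mu> * (v \<bullet> v) \<le> (A *\<^sub>v v) \<bullet> (A *\<^sub>v v)" if v: "v \<in> carrier_vec n" "perpk A n v" for v
  proof (cases "v = 0\<^sub>v n")
    case True then show ?thesis by (simp add: sprod_self_nonneg)
  next
    case False
    define c where "c = 1 / sqrt (v \<bullet> v)"
    have pos: "v \<bullet> v > 0" using sprod_self_nonneg[of v] sprod_self_zero[OF v(1)] False by fastforce
    have "\<mu> \<le> (A *\<^sub>v (c \<cdot>\<^sub>v v)) \<bullet> (A *\<^sub>v (c \<cdot>\<^sub>v v))"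
      unfolding \<mu>_def c_def by (rule v0min[OF normalize[OF v(1) False v(2)]])
    also have "\<dots> = c\<^sup>2 * ((A *\<^sub>v v) \<bullet> (A *\<^sub>v v))"
      using A v by (simp add: mult_mat_vec power2_eq_square)
    also have "c\<^sup>2 = 1 / (v \<bullet> v)" unfolding c_def using pos by (simp add: power_divide)
    finally have "\<mu> \<le> (A *\<^sub>v v) \<bullet> (A *\<^sub>v v) / (v \<bullet> v)" by simp
    then show ?thesis using pos by (simp add: field_simps)
  qed
  have stat: "(A *\<^sub>v v0) \<bullet> (A *\<^sub>v u) = \<mu> * (v0 \<bullet> u)" if u: "u \<in> carrier_vec n" "perpk A n u" for u
  proof -
    have "0 \<le> (2 * ((A *\<^sub>v v0) \<bullet> (A *\<^sub>v u)) - 2 * \<mu> * (v0 \<bullet> u)) * t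
              + ((A *\<^sub>v u) \<bullet> (A *\<^sub>v u) - \<mu> * (u \<bullet> u)) * t\<^sup>2" for t
    proof -
      have p: "perpk A n (v0 + t \<cdot>\<^sub>v u)" by (rule perpk_add[OF v0(3) perpk_smult[OF u(2) u(1)] v0(1)]) (use u in auto)
      have c: "v0 + t \<cdot>\<^sub>v u \<in> carrier_vec n" using v0 u by auto
      have "\<mu> * ((v0 + t \<cdot>\<^sub>v u) \<bullet> (v0 + t \<cdot>\<^sub>v u)) \<le> (A *\<^sub>v (v0 + t \<cdot>\<^sub>v u)) \<bullet> (A *\<^sub>v (v0 + t \<cdot>\<^sub>v u))"
        by (rule hom[OF c p])
      also have "A *\<^sub>v (v0 + t \<cdot>\<^sub>v u) = A *\<^sub>v v0 + t \<cdot>\<^sub>v (A *\<^sub>v u)"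
        using A v0 u by (simp add: mult_add_distrib_mat_vec mult_mat_vec)
      finally have "\<mu> * ((v0 + t \<cdot>\<^sub>v u) \<bullet> (v0 + t \<cdot>\<^sub>v u)) \<le> (A *\<^sub>v v0 + t \<cdot>\<^sub>v (A *\<^sub>v u)) \<bullet> (A *\<^sub>v v0 + t \<cdot>\<^sub>v (A *\<^sub>v u))" .
      moreover have "(v0 + t \<cdot>\<^sub>v u) \<bullet> (v0 + t \<cdot>\<^sub>v u) = 1 + 2 * t * (v0 \<bullet> u) + t\<^sup>2 * (u \<bullet> u)"
        using sprod_expand[OF v0(1) u(1)] v0(2) by simp
      moreover have "(A *\<^sub>v v0 + t \<cdot>\<^sub>v (A *\<^sub>v u)) \<bullet> (A *\<^sub>v v0 + t \<cdot>\<^sub>v (A *\<^sub>v u)) =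
          \<mu> + 2 * t * ((A *\<^sub>v v0) \<bullet> (A *\<^sub>v u)) + t\<^sup>2 * ((A *\<^sub>v u) \<bullet> (A *\<^sub>v u))"
        unfolding \<mu>_def by (rule sprod_expand[of _ r]) (use A v0 u in auto)
      ultimately show ?thesis by (simp add: algebra_simps)
    qed
    then have "2 * ((A *\<^sub>v v0) \<bullet> (A *\<^sub>v u)) - 2 * \<mu> * (v0 \<bullet> u) = 0" by (rule quad_zero)
    then show ?thesis by simp
  qed
  define B where "B = transpose_mat A * A"
  have B: "B \<in> carrier_mat n n" unfolding B_def using A by auto
  have Bv: "B *\<^sub>v v = transpose_mat A *\<^sub>v (A *\<^sub>v v)" if "v \<in> carrier_vec n" for v
    unfolding B_def using A that by (simp add: assoc_mult_mat_vec[of _ n r _ n])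
  have Bsprod: "(B *\<^sub>v v) \<bullet> u = (A *\<^sub>v v) \<bullet> (A *\<^sub>v u)" if "v \<in> carrier_vec n" "u \<in> carrier_vec n" for v u
    unfolding Bv[OF that(1)] by (rule transpose_vec_mult_scalar[OF A that(2)]) (use A that in auto)
  define e where "e = B *\<^sub>v v0 - \<mu> \<cdot>\<^sub>v v0"
  have e: "e \<in> carrier_vec n" unfolding e_def using B v0 by auto
  have esp: "e \<bullet> u = (A *\<^sub>v v0) \<bullet> (A *\<^sub>v u) - \<mu> * (v0 \<bullet> u)" if u: "u \<in> carrier_vec n" for u
  proof -
    have "e \<bullet> u = (B *\<^sub>v v0) \<bullet> u - (\<mu> \<cdot>\<^sub>v v0) \<bullet> u"
      unfolding e_def by (rule minus_scalar_prod_distrib) (use B v0 u in auto)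
    then show ?thesis using Bsprod[OF v0(1) u] v0 u by simp
  qed
  have pe: "perpk A n e" unfolding perpk_def
  proof (intro allI impI)
    fix k assume k: "k \<in> carrier_vec n \<and> A *\<^sub>v k = 0\<^sub>v (dim_row A)"
    have "v0 \<bullet> k = 0" using v0(3) k unfolding perpk_def by auto
    moreover have "(A *\<^sub>v v0) \<bullet> (A *\<^sub>v k) = 0" using k A v0 by simp
    ultimately show "e \<bullet> k = 0" using esp k by simp
  qed
  have "e \<bullet> e = 0" using esp[OF e] stat[OF e pe] by simp
  then have "e = 0\<^sub>v n" by (rule sprod_self_zero[OF e])
  then have ecomp: "(B *\<^sub>v v0) $ i = (\<mu> \<cdot>\<^sub>v v0) $ i" if i: "i < n" for i
  proof -
    have "e $ i = 0" using \<open>e = 0\<^sub>v n\<close> i by simp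
    then show ?thesis unfolding e_def using B v0 i by simp
  qed
  have Bmu: "B *\<^sub>v v0 = \<mu> \<cdot>\<^sub>v v0"
    by (rule eq_vecI) (use B v0 ecomp in auto)
  have v0nz: "v0 \<noteq> 0\<^sub>v n" using v0(2) by auto
  have ev: "eigenvalue B \<mu>" unfolding eigenvalue_def eigenvector_def
    using B v0(1) v0nz Bmu by auto
  have mupos: "\<mu> > 0"
  proof -
    have "\<mu> \<ge> 0" unfolding \<mu>_def by (rule sprod_self_nonneg)
    moreover have "\<mu> \<noteq> 0"
    proof
      assume "\<mu> = 0"
      have c: "A *\<^sub>v v0 \<in> carrier_vec r" using A v0 by auto
      have "A *\<^sub>v v0 = 0\<^sub>v r" by (rule sprod_self_zero[OF c]) (use \<open>\<mu> = 0\<close> in \<open>simp add: \<mu>_def\<close>)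
      then have z: "A *\<^sub>v v0 = 0\<^sub>v (dim_row A)" using dA by simp
      have "\<forall>k. k \<in> carrier_vec n \<and> A *\<^sub>v k = 0\<^sub>v (dim_row A) \<longrightarrow> v0 \<bullet> k = 0"
        using v0(3) unfolding perpk_def .
      then have "v0 \<bullet> v0 = 0" using v0(1) z by blast
      then show False using v0 by simp
    qed
    ultimately show ?thesis by simp
  qed
  show ?thesis using mupos ev hom unfolding B_def by blast
qed


lemma mat_vec_zero: "(A::real mat) \<in> carrier_mat r n \<Longrightarrow> A *\<^sub>v 0\<^sub>v n = 0\<^sub>v r"
  by (intro eq_vecI) auto

lemma eig_nonneg:
  fixes A :: "real mat"
  assumes A: "A \<in> carrier_mat r n" and ev: "eigenvalue (transpose_mat A * A) e"
  shows "e \<ge> 0"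
proof -
  define B where "B = transpose_mat A * A"
  have B: "B \<in> carrier_mat n n" unfolding B_def using A by auto
  obtain v where v: "v \<in> carrier_vec n" "v \<noteq> 0\<^sub>v n" "B *\<^sub>v v = e \<cdot>\<^sub>v v"
    using ev B unfolding eigenvalue_def eigenvector_def B_def by auto
  have "(B *\<^sub>v v) \<bullet> v = (A *\<^sub>v v) \<bullet> (A *\<^sub>v v)"
  proof -
    have "B *\<^sub>v v = transpose_mat A *\<^sub>v (A *\<^sub>v v)"
      unfolding B_def using A v by (simp add: assoc_mult_mat_vec[of _ n r _ n])
    then show ?thesis using transpose_vec_mult_scalar[OF A v(1), of "A *\<^sub>v v"] A v by simp
  qed
  then have "e * (v \<bullet> v) = (A *\<^sub>v v) \<bullet> (A *\<^sub>v v)" using v by simp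
  moreover have "(A *\<^sub>v v) \<bullet> (A *\<^sub>v v) \<ge> 0" by (rule sprod_self_nonneg)
  moreover have "v \<bullet> v > 0" using sprod_self_nonneg[of v] sprod_self_zero[OF v(1)] v(2) by fastforce
  ultimately show ?thesis by (metis zero_le_mult_iff not_less less_eq_real_def)
qed

lemma sigma_bound:
  fixes A :: "real mat"
  assumes A: "A \<in> carrier_mat r n" and Anz: "A \<noteq> 0\<^sub>m r n" and w: "w \<in> carrier_vec n"
  shows "sigma_min A > 0 \<and>
         (\<exists>d\<in>carrier_vec n. A *\<^sub>v d = A *\<^sub>v w \<and> sigma_min A * norm2 d \<le> norm2 (A *\<^sub>v w))"
proof -
  define B where "B = transpose_mat A * A"
  have B: "B \<in> carrier_mat n n" unfolding B_def using A by auto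
  have dA: "dim_row A = r" using A by auto
  have "char_poly B \<noteq> 0" using degree_monic_char_poly[OF B] by auto
  then have "finite {e. poly (char_poly B) e = 0}" by (rule poly_roots_finite)
  moreover have "{e. eigenvalue B e} = {e. poly (char_poly B) e = 0}"
    using eigenvalue_root_char_poly[OF B] by auto
  ultimately have fin_e: "finite {e. eigenvalue B e}" by simp
  define SV where "SV = {s \<in> singular_values A. s \<noteq> 0}"
  have "finite (singular_values A)" unfolding singular_values_def B_def[symmetric]
    using fin_e by simp
  then have finSV: "finite SV" unfolding SV_def by simp
  have SVpos: "s > 0" if "s \<in> SV" for s
  proof -
    have s: "s \<in> singular_values A" "s \<noteq> 0" using that unfolding SV_def by auto
    then obtain e where e: "s = sqrt e" "eigenvalue (transpose_mat A * A) e"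
      unfolding singular_values_def by blast
    have "e \<ge> 0" by (rule eig_nonneg[OF A e(2)])
    then show ?thesis using e(1) s(2) by simp
  qed
  have perp_conv: "perpk A n d" if "\<forall>k\<in>carrier_vec n. A *\<^sub>v k = 0\<^sub>v r \<longrightarrow> d \<bullet> k = 0" for d
    using that dA unfolding perpk_def by auto
  obtain i j where ij: "i < r" "j < n" "A $$ (i, j) \<noteq> 0"
  proof -
    have "\<exists>i j. i < r \<and> j < n \<and> A $$ (i, j) \<noteq> 0"
    proof (rule ccontr)
      assume "\<not> ?thesis"
      then have "A = 0\<^sub>m r n" using A by (intro eq_matI) auto
      then show False using Anz by simp
    qed
    then show ?thesis using that by blast
  qed
  define w1 :: "real vec" where "w1 = unit_vec n j"
  have w1: "w1 \<in> carrier_vec n" unfolding w1_def by simp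
  have "(A *\<^sub>v w1) $ i = A $$ (i, j)" unfolding w1_def using A ij by simp
  then have Aw1: "A *\<^sub>v w1 \<noteq> 0\<^sub>v r" using ij by auto
  obtain d1 where d1: "d1 \<in> carrier_vec n" "A *\<^sub>v d1 = A *\<^sub>v w1"
      "\<forall>k\<in>carrier_vec n. A *\<^sub>v k = 0\<^sub>v r \<longrightarrow> d1 \<bullet> k = 0"
    using min_norm_solution[OF A w1] by blast
  have d1nz: "d1 \<noteq> 0\<^sub>v n" using d1 Aw1 mat_vec_zero[OF A] by auto
  obtain \<mu> where mu: "\<mu> > 0" "eigenvalue B \<mu>"
      "\<And>v. v \<in> carrier_vec n \<Longrightarrow> perpk A n v \<Longrightarrow> \<mu> * (v \<bullet> v) \<le> (A *\<^sub>v v) \<bullet> (A *\<^sub>v v)"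
    using rayleigh[OF A d1(1) d1nz perp_conv[OF d1(3)]] unfolding B_def by blast
  have "sqrt \<mu> \<in> SV" unfolding SV_def singular_values_def B_def[symmetric] using mu by auto
  then have SVne: "SV \<noteq> {}" by auto
  define \<sigma> where "\<sigma> = sigma_min A"
  have sig: "\<sigma> = Min SV" unfolding \<sigma>_def sigma_min_def SV_def by simp
  have "\<sigma> \<in> SV" unfolding sig using finSV SVne by (rule Min_in)
  then have sigpos: "\<sigma> > 0" by (rule SVpos)
  have "\<sigma> \<le> sqrt \<mu>" unfolding sig using finSV \<open>sqrt \<mu> \<in> SV\<close> by (rule Min_le)
  then have sig2: "\<sigma>\<^sup>2 \<le> \<mu>" using sigpos mu(1)
    by (metis less_eq_real_def power_mono real_sqrt_pow2)
  obtain d where d: "d \<in> carrier_vec n" "A *\<^sub>v d = A *\<^sub>v w"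
      "\<forall>k\<in>carrier_vec n. A *\<^sub>v k = 0\<^sub>v r \<longrightarrow> d \<bullet> k = 0"
    using min_norm_solution[OF A w] by blast
  have "\<mu> * (d \<bullet> d) \<le> (A *\<^sub>v w) \<bullet> (A *\<^sub>v w)"
    using mu(3)[OF d(1) perp_conv[OF d(3)]] d(2) by simp
  moreover have "\<sigma>\<^sup>2 * (d \<bullet> d) \<le> \<mu> * (d \<bullet> d)"
    using sig2 sprod_self_nonneg[of d] by (rule mult_right_mono)
  ultimately have le: "\<sigma>\<^sup>2 * (d \<bullet> d) \<le> (A *\<^sub>v w) \<bullet> (A *\<^sub>v w)" by linarith
  have "\<sigma> * norm2 d = sqrt (\<sigma>\<^sup>2 * (d \<bullet> d))"
    unfolding norm2_sprod using sigpos by (simp add: real_sqrt_mult)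
  also have "\<dots> \<le> norm2 (A *\<^sub>v w)" unfolding norm2_sprod using le by (rule real_sqrt_le_mono)
  finally show ?thesis using sigpos d unfolding \<sigma>_def by blast
qed



lemma off_Suc: "off n (Suc l) = off n l + n l"
  unfolding off_def by simp

lemma off_mono: "k \<le> l \<Longrightarrow> off n k \<le> off n l"
  unfolding off_def by (rule sum_mono2) auto

lemma off_bound: "l \<le> L \<Longrightarrow> off n l + n l \<le> tot_dim n L"
proof -
  assume "l \<le> L"
  have "off n l + n l = (\<Sum>k\<le>l. n k)" unfolding off_def by (simp add: lessThan_Suc_atMost[symmetric])
  also have "\<dots> \<le> (\<Sum>k\<le>L. n k)" by (rule sum_mono2) (use \<open>l \<le> L\<close> in auto)
  finally show ?thesis unfolding tot_dim_def .
qed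

lemma blk_carrier[simp]: "blk n l x \<in> carrier_vec (n l)"
  unfolding blk_def by simp

lemma emb_carrier[simp]: "emb n L l d \<in> carrier_vec (tot_dim n L)"
  unfolding emb_def by simp

lemma dim_emb[simp]: "dim_vec (emb n L l d) = tot_dim n L"
  unfolding emb_def by simp

lemma dim_blk[simp]: "dim_vec (blk n l x) = n l"
  unfolding blk_def by simp

lemma blk_emb_same:
  assumes x: "x \<in> carrier_vec (tot_dim n L)" and l: "l \<le> L" and d: "d \<in> carrier_vec (n l)"
  shows "blk n l (x + t \<cdot>\<^sub>v emb n L l d) = blk n l x + t \<cdot>\<^sub>v d"
proof (rule eq_vecI)
  show "dim_vec (blk n l (x + t \<cdot>\<^sub>v emb n L l d)) = dim_vec (blk n l x + t \<cdot>\<^sub>v d)"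
    using d by (simp add: blk_def)
  fix j assume "j < dim_vec (blk n l x + t \<cdot>\<^sub>v d)"
  then have j: "j < n l" using d by (simp add: blk_def)
  have lt: "off n l + j < tot_dim n L" using off_bound[OF l, of n] j by simp
  show "blk n l (x + t \<cdot>\<^sub>v emb n L l d) $ j = (blk n l x + t \<cdot>\<^sub>v d) $ j"
    using j lt x d by (simp add: blk_def emb_def)
qed

lemma blk_emb_other:
  assumes x: "x \<in> carrier_vec (tot_dim n L)" and l: "l \<le> L" and k: "k \<le> L" "k \<noteq> l"
  shows "blk n k (x + t \<cdot>\<^sub>v emb n L l d) = blk n k x"
proof (rule eq_vecI)
  show "dim_vec (blk n k (x + t \<cdot>\<^sub>v emb n L l d)) = dim_vec (blk n k x)"
    by (simp add: blk_def)
  fix j assume "j < dim_vec (blk n k x)"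
  then have j: "j < n k" by (simp add: blk_def)
  have lt: "off n k + j < tot_dim n L" using off_bound[OF k(1), of n] j by simp
  have out: "\<not> (off n l \<le> off n k + j \<and> off n k + j < off n l + n l)"
  proof (cases "k < l")
    case True
    then have "off n (Suc k) \<le> off n l" by (intro off_mono) simp
    then show ?thesis using j off_Suc[of n k] by simp
  next
    case False
    then have "Suc l \<le> k" using k(2) by simp
    then have "off n (Suc l) \<le> off n k" by (rule off_mono)
    then show ?thesis using off_Suc[of n l] by simp
  qed
  have "emb n L l d $ (off n k + j) = 0" unfolding emb_def using lt out by (subst index_vec) auto
  then show "blk n k (x + t \<cdot>\<^sub>v emb n L l d) $ j = blk n k x $ j"
    using j lt x by (simp add: blk_def carrier_vecD)
qed

lemma emb_smult:
  assumes d: "d \<in> carrier_vec (n l)"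
  shows "emb n L l (s \<cdot>\<^sub>v d) = s \<cdot>\<^sub>v emb n L l d"
  by (rule eq_vecI) (use d in \<open>auto simp: emb_def\<close>)

lemma sum_blk_diff:
  fixes F :: "nat \<Rightarrow> real vec \<Rightarrow> real"
  assumes x: "x \<in> carrier_vec (tot_dim n L)" and l: "l \<in> {1..L}"
  shows "(\<Sum>k\<in>{1..L}. F k (blk n k (x + t \<cdot>\<^sub>v emb n L l d))) =
         (\<Sum>k\<in>{1..L}. F k (blk n k x)) - F l (blk n l x) + F l (blk n l (x + t \<cdot>\<^sub>v emb n L l d))"
proof -
  have lL: "l \<le> L" using l by simp
  have "(\<Sum>k\<in>{1..L}. F k (blk n k (x + t \<cdot>\<^sub>v emb n L l d))) =
        F l (blk n l (x + t \<cdot>\<^sub>v emb n L l d)) + (\<Sum>k\<in>{1..L} - {l}. F k (blk n k (x + t \<cdot>\<^sub>v emb n L l d)))"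
    by (rule sum.remove) (use l in auto)
  also have "(\<Sum>k\<in>{1..L} - {l}. F k (blk n k (x + t \<cdot>\<^sub>v emb n L l d))) = (\<Sum>k\<in>{1..L} - {l}. F k (blk n k x))"
    by (rule sum.cong) (use blk_emb_other[OF x lL] in auto)
  also have "(\<Sum>k\<in>{1..L} - {l}. F k (blk n k x)) = (\<Sum>k\<in>{1..L}. F k (blk n k x)) - F l (blk n l x)"
    using sum.remove[of "{1..L}" l "\<lambda>k. F k (blk n k x)"] l by simp
  finally show ?thesis by simp
qed

lemma dir_deriv_eq: "has_dir_deriv h x d D \<Longrightarrow> dir_deriv h x d = D"
  unfolding has_dir_deriv_def dir_deriv_def by (rule tendsto_Lim) simp_all

lemma has_dir_deriv_smult:
  assumes h: "has_dir_deriv h x d D" and s: "s > 0"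
  shows "has_dir_deriv h x (s \<cdot>\<^sub>v d) (s * D)"
proof -
  define q where "q = (\<lambda>t. (h (x + t \<cdot>\<^sub>v d) - h x) / t)"
  have q: "(q \<longlongrightarrow> D) (at_right 0)" using h unfolding has_dir_deriv_def q_def .
  have lim: "filterlim (\<lambda>t::real. s * t) (at_right 0) (at_right 0)"
  proof -
    have "((\<lambda>t::real. s * t) \<longlongrightarrow> s * 0) (at_right 0)"
      by (intro tendsto_intros)
    then have t: "((\<lambda>t::real. s * t) \<longlongrightarrow> 0) (at_right 0)" by simp
    have ev: "eventually (\<lambda>t::real. s * t \<in> {0<..} \<and> s * t \<noteq> 0) (at_right 0)"
      using s by (auto simp: eventually_at_right_field intro!: exI[of _ 1])
    show ?thesis unfolding filterlim_at using t ev by blast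
  qed
  have "((\<lambda>t. q (s * t)) \<longlongrightarrow> D) (at_right 0)"
    by (rule filterlim_compose[OF q lim])
  then have "((\<lambda>t. s * q (s * t)) \<longlongrightarrow> s * D) (at_right 0)"
    by (intro tendsto_intros)
  moreover have "eventually (\<lambda>t. s * q (s * t) = (h (x + t \<cdot>\<^sub>v (s \<cdot>\<^sub>v d)) - h x) / t) (at_right 0)"
  proof -
    have "s * q (s * t) = (h (x + t \<cdot>\<^sub>v (s \<cdot>\<^sub>v d)) - h x) / t" if "t > 0" for t :: real
      unfolding q_def using that s by (simp add: smult_smult_assoc mult.commute)
    then show ?thesis by (auto simp: eventually_at_right_field intro!: exI[of _ 1])
  qed
  ultimately show ?thesis unfolding has_dir_deriv_def
    by (rule Lim_transform_eventually)
qed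

lemma dir_deriv_bound:
  assumes F: "has_dir_deriv F x e DF" and G: "has_dir_deriv G x e DG" and \<delta>: "\<delta> > 0"
    and le: "\<And>t. 0 < t \<Longrightarrow> t \<le> \<delta> \<Longrightarrow> (F (x + t \<cdot>\<^sub>v e) - F x) / t \<le> (G (x + t \<cdot>\<^sub>v e) - G x) / t + C"
  shows "DF \<le> DG + C"
proof -
  have "((\<lambda>t. (F (x + t \<cdot>\<^sub>v e) - F x) / t - (G (x + t \<cdot>\<^sub>v e) - G x) / t) \<longlongrightarrow> DF - DG) (at_right 0)"
    using F G unfolding has_dir_deriv_def by (intro tendsto_intros)
  moreover have "eventually (\<lambda>t. C \<ge> (F (x + t \<cdot>\<^sub>v e) - F x) / t - (G (x + t \<cdot>\<^sub>v e) - G x) / t) (at_right 0)"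
    unfolding eventually_at_right_field using \<delta> le by (intro exI[of _ \<delta>]) force
  ultimately have "DF - DG \<le> C" by (rule tendsto_upperbound) simp
  then show ?thesis by simp
qed



lemma bnorm_nonneg: "bnorm p z i \<ge> 0"
  unfolding bnorm_def by (simp add: sum_nonneg)

lemma fam_finite: "finite {\<Lambda>::nat set. \<Lambda> \<subseteq> {..<m} \<and> card \<Lambda> = m - K}"
  by (rule finite_subset[of _ "Pow {..<m}"]) auto

lemma fam_nonempty: "{..<m - K} \<in> {\<Lambda>::nat set. \<Lambda> \<subseteq> {..<m} \<and> card \<Lambda> = m - K}"
  by auto

lemma trimmed_attained:
  "\<exists>\<Lambda>. \<Lambda> \<subseteq> {..<m} \<and> card \<Lambda> = m - K \<and> trimmed K m p z = (\<Sum>i\<in>\<Lambda>. bnorm p z i)"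
proof -
  let ?F = "{\<Lambda>::nat set. \<Lambda> \<subseteq> {..<m} \<and> card \<Lambda> = m - K}"
  have "trimmed K m p z \<in> (\<lambda>\<Lambda>. \<Sum>i\<in>\<Lambda>. bnorm p z i) ` ?F"
    unfolding trimmed_def
  proof (rule Min_in)
    show "finite ((\<lambda>\<Lambda>. \<Sum>i\<in>\<Lambda>. bnorm p z i) ` ?F)" using fam_finite by simp
    show "(\<lambda>\<Lambda>. \<Sum>i\<in>\<Lambda>. bnorm p z i) ` ?F \<noteq> {}" using fam_nonempty[of m K] by blast
  qed
  then show ?thesis by auto
qed

lemma trimmed_le:
  assumes "\<Lambda> \<subseteq> {..<m}" "card \<Lambda> = m - K"
  shows "trimmed K m p z \<le> (\<Sum>i\<in>\<Lambda>. bnorm p z i)"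
  unfolding trimmed_def by (rule Min_le) (use fam_finite assms in auto)

lemma trimmed_nonneg: "trimmed K m p z \<ge> 0"
proof -
  obtain \<Lambda> where "trimmed K m p z = (\<Sum>i\<in>\<Lambda>. bnorm p z i)" using trimmed_attained by blast
  then show ?thesis by (simp add: sum_nonneg bnorm_nonneg)
qed

lemma R_bound:
  fixes p m r :: nat
  assumes p: "p \<ge> 1" and \<Lambda>: "\<Lambda> \<subseteq> {..<m}" and r: "r div p \<in> \<Lambda>"
  shows "r < m * p"
proof -
  have "r div p < m" using r \<Lambda> by auto
  then have "r div p + 1 \<le> m" by simp
  then have "p * (r div p + 1) \<le> p * m" by (rule mult_le_mono2)
  moreover have "r < p * (r div p + 1)"
  proof -
    have "r mod p < p" using p by simp
    then have "r < p * (r div p) + p" using mult_div_mod_eq[of p r] by linarith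
    then show ?thesis by (simp add: distrib_left)
  qed
  ultimately show ?thesis by (simp add: mult.commute)
qed

lemma R_finite:
  fixes p m :: nat
  assumes "p \<ge> 1" "\<Lambda> \<subseteq> {..<m}"
  shows "finite {r. r div p \<in> \<Lambda>}"
  by (rule finite_subset[of _ "{..<m*p}"]) (use R_bound[OF assms] in auto)

lemma pick_bij:
  assumes fin: "finite R"
  shows "bij_betw (pick R) {..<card R} R"
proof (rule bij_betwI')
  fix a b assume a: "a \<in> {..<card R}" and b: "b \<in> {..<card R}"
  show "(pick R a = pick R b) = (a = b)"
  proof
    assume "pick R a = pick R b"
    then have "card {x\<in>R. x < pick R a} = card {x\<in>R. x < pick R b}" by simp
    then show "a = b" using card_pick_le[of a R] card_pick_le[of b R] a b by simp
  qed simp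
next
  fix a assume "a \<in> {..<card R}"
  then show "pick R a \<in> R" using pick_in_set_le by auto
next
  fix r assume r: "r \<in> R"
  have "{x\<in>R. x < r} \<subset> R" using r by auto
  then have "card {x\<in>R. x < r} < card R" by (rule psubset_card_mono[OF fin])
  then show "\<exists>a\<in>{..<card R}. r = pick R a" using pick_card_in_set[OF r] by force
qed

lemma sum_pick:
  assumes "finite R"
  shows "(\<Sum>k<card R. g (pick R k)) = (\<Sum>r\<in>R. g r)"
  using sum.reindex_bij_betw[OF pick_bij[OF assms], of g] by simp

lemma sum_blocks:
  fixes p m :: nat
  assumes p: "p \<ge> 1" and \<Lambda>: "\<Lambda> \<subseteq> {..<m}"
  shows "(\<Sum>r\<in>{r. r div p \<in> \<Lambda>}. h r) = (\<Sum>i\<in>\<Lambda>. \<Sum>j<p. h (i * p + j))"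
proof -
  have fin: "finite \<Lambda>" using \<Lambda> finite_subset by blast
  have inj: "inj_on (\<lambda>(i, j). i * p + j) (\<Lambda> \<times> {..<p})"
  proof (rule inj_onI, clarify)
    fix i j i' j' assume "j < p" "j' < p" "i * p + j = i' * p + j'"
    note e = \<open>i * p + j = i' * p + j'\<close>
    have d1: "(i * p + j) div p = i" "(i * p + j) mod p = j" using \<open>j < p\<close> by auto
    have d2: "(i' * p + j') div p = i'" "(i' * p + j') mod p = j'" using \<open>j' < p\<close> by auto
    show "i = i' \<and> j = j'" using d1 d2 e by metis
  qed
  have img: "(\<lambda>(i, j). i * p + j) ` (\<Lambda> \<times> {..<p}) = {r. r div p \<in> \<Lambda>}"
  proof
    show "(\<lambda>(i, j). i * p + j) ` (\<Lambda> \<times> {..<p}) \<subseteq> {r. r div p \<in> \<Lambda>}"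
      using p by auto
    show "{r. r div p \<in> \<Lambda>} \<subseteq> (\<lambda>(i, j). i * p + j) ` (\<Lambda> \<times> {..<p})"
    proof
      fix r assume r: "r \<in> {r. r div p \<in> \<Lambda>}"
      have "r = (r div p) * p + r mod p" by simp
      moreover have "r mod p < p" using p by simp
      ultimately show "r \<in> (\<lambda>(i, j). i * p + j) ` (\<Lambda> \<times> {..<p})" using r by force
    qed
  qed
  have "(\<Sum>r\<in>{r. r div p \<in> \<Lambda>}. h r) = (\<Sum>x\<in>\<Lambda> \<times> {..<p}. h ((\<lambda>(i, j). i * p + j) x))"
    unfolding img[symmetric] using sum.reindex[OF inj, of h] by (simp add: o_def)
  also have "\<dots> = (\<Sum>(i,j)\<in>\<Lambda> \<times> {..<p}. h (i * p + j))"
    by (rule sum.cong) auto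
  also have "\<dots> = (\<Sum>i\<in>\<Lambda>. \<Sum>j<p. h (i * p + j))"
    by (rule sum.cartesian_product[symmetric])
  finally show ?thesis .
qed

lemma block_rows_carrier:
  assumes D: "D \<in> carrier_mat (m * p) N" and p: "p \<ge> 1" and \<Lambda>: "\<Lambda> \<subseteq> {..<m}"
  shows "block_rows p D \<Lambda> \<in> carrier_mat (card {r. r div p \<in> \<Lambda>}) N"
proof -
  have "{i. i < dim_row D \<and> i \<in> {r. r div p \<in> \<Lambda>}} = {r. r div p \<in> \<Lambda>}"
    using D R_bound[OF p \<Lambda>] by auto
  moreover have "{j. j < dim_col D \<and> j \<in> UNIV} = {..<N}" using D by auto
  ultimately show ?thesis unfolding block_rows_def carrier_mat_def
    by (simp add: dim_submatrix)
qed

lemma block_rows_mult: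
  assumes D: "D \<in> carrier_mat (m * p) N" and p: "p \<ge> 1" and \<Lambda>: "\<Lambda> \<subseteq> {..<m}"
    and v: "v \<in> carrier_vec N" and k: "k < card {r. r div p \<in> \<Lambda>}"
  shows "(block_rows p D \<Lambda> *\<^sub>v v) $ k = (D *\<^sub>v v) $ (pick {r. r div p \<in> \<Lambda>} k)"
proof -
  let ?R = "{r. r div p \<in> \<Lambda>}"
  have eqR: "{i. i < dim_row D \<and> i \<in> ?R} = ?R"
    using D R_bound[OF p \<Lambda>] by auto
  have eqC: "{j. j < dim_col D \<and> j \<in> UNIV} = {..<N}" using D by auto
  have A: "block_rows p D \<Lambda> \<in> carrier_mat (card ?R) N" by (rule block_rows_carrier[OF D p \<Lambda>])
  have pk: "pick ?R k \<in> ?R" by (rule pick_in_set_le) (use k in simp)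
  then have pkM: "pick ?R k < m * p" using R_bound[OF p \<Lambda>] by auto
  have "(block_rows p D \<Lambda> *\<^sub>v v) $ k = (\<Sum>j\<in>{0..<N}. block_rows p D \<Lambda> $$ (k, j) * v $ j)"
    using A v k by (simp add: scalar_prod_def)
  also have "\<dots> = (\<Sum>j\<in>{0..<N}. D $$ (pick ?R k, j) * v $ j)"
  proof (rule sum.cong[OF refl])
    fix j assume j: "j \<in> {0..<N}"
    have "block_rows p D \<Lambda> $$ (k, j) = D $$ (pick ?R k, pick UNIV j)"
      unfolding block_rows_def by (rule submatrix_index) (use k j eqR eqC in auto)
    then show "block_rows p D \<Lambda> $$ (k, j) * v $ j = D $$ (pick ?R k, j) * v $ j"
      by (simp add: pick_UNIV)
  qed
  also have "\<dots> = (D *\<^sub>v v) $ (pick ?R k)"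
    using D v pkM by (simp add: scalar_prod_def)
  finally show ?thesis .
qed


section \<open>The descent direction\<close>

lemma sq_bnorm: "(bnorm p z i)\<^sup>2 = (\<Sum>j<p. (z $ (i * p + j))\<^sup>2)"
  unfolding bnorm_def by (simp add: sum_nonneg)

lemma sum_sq_le_sq_sum:
  fixes a :: "nat \<Rightarrow> real"
  assumes "finite \<Lambda>" "\<And>i. i \<in> \<Lambda> \<Longrightarrow> a i \<ge> 0"
  shows "(\<Sum>i\<in>\<Lambda>. (a i)\<^sup>2) \<le> (\<Sum>i\<in>\<Lambda>. a i)\<^sup>2"
  using assms
proof (induction \<Lambda> rule: finite_induct)
  case empty then show ?case by simp
next
  case (insert x F)
  have "0 \<le> a x" using insert by auto
  moreover have "0 \<le> (\<Sum>i\<in>F. a i)" using insert by (auto intro: sum_nonneg)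
  ultimately have "0 \<le> 2 * a x * (\<Sum>i\<in>F. a i)" by simp
  moreover have "(\<Sum>i\<in>F. (a i)\<^sup>2) \<le> (\<Sum>i\<in>F. a i)\<^sup>2" using insert by auto
  ultimately show ?case using insert by (simp add: power2_eq_square algebra_simps)
qed

lemma sum_zero_nonneg_each:
  fixes a :: "nat \<Rightarrow> real"
  assumes "finite \<Lambda>" "\<And>i. i \<in> \<Lambda> \<Longrightarrow> a i \<ge> 0" "(\<Sum>i\<in>\<Lambda>. (a i)\<^sup>2) = 0"
  shows "(\<Sum>i\<in>\<Lambda>. a i) = 0"
proof -
  have "\<forall>i\<in>\<Lambda>. (a i)\<^sup>2 = 0" using assms by (subst sum_nonneg_eq_0_iff[symmetric]) auto
  then show ?thesis by simp
qed

lemma direction: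
  fixes D :: "real mat"
  assumes D: "D \<in> carrier_mat (m * p) N" and Dnz: "D \<noteq> 0\<^sub>m (m * p) N"
    and p: "p \<ge> 1" and u: "u \<in> carrier_vec N" and z: "z \<in> carrier_vec (m * p)"
    and Du: "D *\<^sub>v u = - z"
    and \<Lambda>: "\<Lambda> \<subseteq> {..<m}" "card \<Lambda> = m - K"
    and T0: "T0 = (\<Sum>i\<in>\<Lambda>. bnorm p z i)" "T0 > 0"
  shows "\<exists>d\<in>carrier_vec N. (\<forall>i\<in>\<Lambda>. \<forall>j<p. (D *\<^sub>v d) $ (i * p + j) = - z $ (i * p + j)) \<and>
            sigma_K K m p D > 0 \<and> sigma_K K m p D * norm2 d \<le> T0"
proof -
  define R where "R = {r. r div p \<in> \<Lambda>}"
  have finR: "finite R" unfolding R_def by (rule R_finite[OF p \<Lambda>(1)])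
  have RM: "r < m * p" if "r \<in> R" for r using R_bound[OF p \<Lambda>(1)] that unfolding R_def by auto
  have finL: "finite \<Lambda>" using \<Lambda>(1) finite_subset by blast
  have T0nn: "T0 \<ge> 0" using T0 by simp
  have Dui: "(D *\<^sub>v u) $ r = - z $ r" if "r < m * p" for r using Du that z by simp
  have sumR: "(\<Sum>r\<in>R. (z $ r)\<^sup>2) = (\<Sum>i\<in>\<Lambda>. (bnorm p z i)\<^sup>2)"
    unfolding R_def sum_blocks[OF p \<Lambda>(1)] sq_bnorm ..
  have sumR_le: "(\<Sum>r\<in>R. (z $ r)\<^sup>2) \<le> T0\<^sup>2"
    unfolding sumR T0(1) by (rule sum_sq_le_sq_sum[OF finL bnorm_nonneg])
  have inR: "i * p + j \<in> R" if "i \<in> \<Lambda>" "j < p" for i j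
    unfolding R_def using that by simp
  show ?thesis
  proof (cases "surjective_mat D")
    case True
    have sK: "sigma_K K m p D = sigma_min D" unfolding sigma_K_def using True by simp
    define y where "y = vec (m * p) (\<lambda>r. if r \<in> R then - z $ r else 0)"
    have y: "y \<in> carrier_vec (m * p)" unfolding y_def by simp
    obtain u' where u': "u' \<in> carrier_vec N" "D *\<^sub>v u' = y"
      using True y D unfolding surjective_mat_def by auto
    obtain d where d: "d \<in> carrier_vec N" "D *\<^sub>v d = D *\<^sub>v u'" "sigma_min D * norm2 d \<le> norm2 (D *\<^sub>v u')"
      and spos: "sigma_min D > 0"
      using sigma_bound[OF D Dnz u'(1)] by blast
    have "y \<bullet> y = (\<Sum>r\<in>{0..<m * p}. if r \<in> R then (z $ r)\<^sup>2 else 0)"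
      unfolding scalar_prod_def y_def by (intro sum.cong) (auto simp: power2_eq_square)
    also have "\<dots> = (\<Sum>r\<in>R. (z $ r)\<^sup>2)"
    proof -
      have "R \<subseteq> {0..<m * p}" using RM by auto
      then have "{0..<m * p} \<inter> R = R" by auto
      then show ?thesis by (simp add: sum.If_cases)
    qed
    finally have "y \<bullet> y \<le> T0\<^sup>2" using sumR_le by simp
    then have ny: "norm2 y \<le> T0" unfolding norm2_sprod using T0nn
      by (metis real_sqrt_le_mono real_sqrt_abs abs_of_nonneg)
    show ?thesis
    proof (intro bexI conjI ballI allI impI)
      show "d \<in> carrier_vec N" by fact
      fix i j assume "i \<in> \<Lambda>" "j < p"
      then have r: "i * p + j \<in> R" by (rule inR)
      show "(D *\<^sub>v d) $ (i * p + j) = - z $ (i * p + j)"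
        using d(2) u'(2) r RM[OF r] unfolding y_def by simp
    next
      show "sigma_K K m p D > 0" using sK spos by simp
      show "sigma_K K m p D * norm2 d \<le> T0" using sK d(3) u'(2) ny by simp
    qed
  next
    case False
    define A where "A = block_rows p D \<Lambda>"
    have A: "A \<in> carrier_mat (card R) N" unfolding A_def R_def by (rule block_rows_carrier[OF D p \<Lambda>(1)])
    have Av: "(A *\<^sub>v v) $ k = (D *\<^sub>v v) $ (pick R k)" if "v \<in> carrier_vec N" "k < card R" for v k
      unfolding A_def R_def by (rule block_rows_mult[OF D p \<Lambda>(1)]) (use that in \<open>auto simp: R_def\<close>)
    have pickR: "pick R k \<in> R" if "k < card R" for k using pick_in_set_le that by auto
    have Au2: "(A *\<^sub>v u) \<bullet> (A *\<^sub>v u) = (\<Sum>r\<in>R. (z $ r)\<^sup>2)"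
    proof -
      have "(A *\<^sub>v u) \<bullet> (A *\<^sub>v u) = (\<Sum>k<card R. ((D *\<^sub>v u) $ (pick R k))\<^sup>2)"
        unfolding scalar_prod_def using A u Av
        by (auto simp: power2_eq_square atLeast0LessThan intro!: sum.cong)
      also have "\<dots> = (\<Sum>r\<in>R. ((D *\<^sub>v u) $ r)\<^sup>2)" by (rule sum_pick[OF finR])
      also have "\<dots> = (\<Sum>r\<in>R. (z $ r)\<^sup>2)" by (rule sum.cong) (auto simp: Dui RM)
      finally show ?thesis .
    qed
    have Anz: "A \<noteq> 0\<^sub>m (card R) N"
    proof
      assume "A = 0\<^sub>m (card R) N"
      moreover have "0\<^sub>m (card R) N *\<^sub>v u = 0\<^sub>v (card R)"
        by (rule eq_vecI) (use u in \<open>auto simp: scalar_prod_def\<close>)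
      ultimately have "A *\<^sub>v u = 0\<^sub>v (card R)" by simp
      then have "(\<Sum>i\<in>\<Lambda>. (bnorm p z i)\<^sup>2) = 0" using Au2 sumR by simp
      then have "T0 = 0" unfolding T0(1) by (rule sum_zero_nonneg_each[OF finL bnorm_nonneg])
      then show False using T0 by simp
    qed
    obtain d where d: "d \<in> carrier_vec N" "A *\<^sub>v d = A *\<^sub>v u" "sigma_min A * norm2 d \<le> norm2 (A *\<^sub>v u)"
      and sApos: "sigma_min A > 0"
      using sigma_bound[OF A Anz u] by blast
    have nAu: "norm2 (A *\<^sub>v u) \<le> T0" unfolding norm2_sprod Au2 using sumR_le T0nn
      by (metis real_sqrt_le_mono real_sqrt_abs abs_of_nonneg)
    define SS where "SS = {sigma_min (block_rows p D \<Lambda>') | \<Lambda>'.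
                 \<Lambda>' \<subseteq> {..<m} \<and> card \<Lambda>' = m - K \<and> nonzero_mat (block_rows p D \<Lambda>')}"
    have sK: "sigma_K K m p D = Min SS" unfolding sigma_K_def SS_def using False by simp
    have finSS: "finite SS"
    proof -
      have "SS \<subseteq> (\<lambda>\<Lambda>'. sigma_min (block_rows p D \<Lambda>')) ` {\<Lambda>'::nat set. \<Lambda>' \<subseteq> {..<m} \<and> card \<Lambda>' = m - K}"
        unfolding SS_def by auto
      then show ?thesis using fam_finite finite_subset by blast
    qed
    have nzA: "nonzero_mat A" unfolding nonzero_mat_def using A Anz by auto
    have inSS: "sigma_min A \<in> SS" unfolding SS_def A_def using \<Lambda> nzA A_def by blast
    have SSpos: "s > 0" if sS: "s \<in> SS" for s
    proof -
      obtain \<Lambda>' where L': "s = sigma_min (block_rows p D \<Lambda>')" "\<Lambda>' \<subseteq> {..<m}" "nonzero_mat (block_rows p D \<Lambda>')"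
        using sS unfolding SS_def by blast
      have A': "block_rows p D \<Lambda>' \<in> carrier_mat (card {r. r div p \<in> \<Lambda>'}) N"
        by (rule block_rows_carrier[OF D p L'(2)])
      have "block_rows p D \<Lambda>' \<noteq> 0\<^sub>m (card {r. r div p \<in> \<Lambda>'}) N"
        using L'(3) A' unfolding nonzero_mat_def by auto
      then show ?thesis using sigma_bound[OF A' _ zero_carrier_vec[of N]] L'(1) by blast
    qed
    have sKpos: "sigma_K K m p D > 0" unfolding sK
      by (rule SSpos, rule Min_in[OF finSS]) (use inSS in auto)
    have sKle: "sigma_K K m p D \<le> sigma_min A" unfolding sK by (rule Min_le[OF finSS inSS])
    show ?thesis
    proof (intro bexI conjI ballI allI impI)
      show "d \<in> carrier_vec N" by fact
      fix i j assume "i \<in> \<Lambda>" "j < p"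
      then have r: "i * p + j \<in> R" by (rule inR)
      define k where "k = card {a\<in>R. a < i * p + j}"
      have pk: "pick R k = i * p + j" unfolding k_def by (rule pick_card_in_set[OF r])
      have "{a\<in>R. a < i * p + j} \<subset> R" using r by auto
      then have kR: "k < card R" unfolding k_def by (rule psubset_card_mono[OF finR])
      have "(D *\<^sub>v d) $ (i * p + j) = (A *\<^sub>v d) $ k" using Av[OF d(1) kR] pk by simp
      also have "\<dots> = (A *\<^sub>v u) $ k" using d(2) by simp
      also have "\<dots> = (D *\<^sub>v u) $ (i * p + j)" using Av[OF u kR] pk by simp
      also have "\<dots> = - z $ (i * p + j)" using Dui RM[OF r] by simp
      finally show "(D *\<^sub>v d) $ (i * p + j) = - z $ (i * p + j)" .
    next
      show "sigma_K K m p D > 0" by fact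
      have "sigma_K K m p D * norm2 d \<le> sigma_min A * norm2 d"
        using sKle by (rule mult_right_mono) (simp add: norm2_def sum_nonneg)
      then show "sigma_K K m p D * norm2 d \<le> T0" using d(3) nAu by linarith
    qed
  qed
qed


lemma trimmed_decrease:
  fixes z v :: "real vec"
  assumes p: "p \<ge> 1" and \<Lambda>: "\<Lambda> \<subseteq> {..<m}" "card \<Lambda> = m - K"
    and T: "trimmed K m p z = (\<Sum>i\<in>\<Lambda>. bnorm p z i)"
    and z: "z \<in> carrier_vec (m * p)" and v: "v \<in> carrier_vec (m * p)"
    and vz: "\<And>i j. i \<in> \<Lambda> \<Longrightarrow> j < p \<Longrightarrow> v $ (i * p + j) = - z $ (i * p + j)"
    and t: "0 \<le> t" "t \<le> 1"
  shows "trimmed K m p (z + t \<cdot>\<^sub>v v) \<le> (1 - t) * trimmed K m p z"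
proof -
  have "trimmed K m p (z + t \<cdot>\<^sub>v v) \<le> (\<Sum>i\<in>\<Lambda>. bnorm p (z + t \<cdot>\<^sub>v v) i)"
    by (rule trimmed_le[OF \<Lambda>])
  also have "\<dots> = (\<Sum>i\<in>\<Lambda>. (1 - t) * bnorm p z i)"
  proof (rule sum.cong[OF refl])
    fix i assume i: "i \<in> \<Lambda>"
    have comp: "(z + t \<cdot>\<^sub>v v) $ (i * p + j) = (1 - t) * z $ (i * p + j)" if j: "j < p" for j
    proof -
      have "i * p + j < m * p" by (rule R_bound[OF p \<Lambda>(1)]) (use i j in simp)
      then show ?thesis using z v vz[OF i j] by (simp add: algebra_simps)
    qed
    have "bnorm p (z + t \<cdot>\<^sub>v v) i = sqrt (\<Sum>j<p. ((1 - t) * z $ (i * p + j))\<^sup>2)"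
      unfolding bnorm_def using comp by simp
    also have "\<dots> = sqrt ((1 - t)\<^sup>2 * (\<Sum>j<p. (z $ (i * p + j))\<^sup>2))"
      by (simp add: power_mult_distrib sum_distrib_left)
    also have "\<dots> = (1 - t) * bnorm p z i"
      unfolding bnorm_def using t by (simp add: real_sqrt_mult)
    finally show "bnorm p (z + t \<cdot>\<^sub>v v) i = (1 - t) * bnorm p z i" .
  qed
  also have "\<dots> = (1 - t) * trimmed K m p z" unfolding T by (simp add: sum_distrib_left)
  finally show ?thesis .
qed

lemma obj_diff:
  assumes x: "x \<in> carrier_vec (tot_dim n L)" and l: "l \<in> {1..L}" and d: "d \<in> carrier_vec (n l)"
  shows "objective L n m p K \<gamma> c D f (x + t \<cdot>\<^sub>v emb n L l d) - objective L n m p K \<gamma> c D f x =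
    (f (x + t \<cdot>\<^sub>v emb n L l d) - f x) +
    \<gamma> l * (trimmed (K l) (m l) (p l) (D l *\<^sub>v (blk n l x + t \<cdot>\<^sub>v d) - c l)
           - trimmed (K l) (m l) (p l) (D l *\<^sub>v blk n l x - c l))"
proof -
  have lL: "l \<le> L" using l by simp
  note S = sum_blk_diff[OF x l, of "\<lambda>k v. \<gamma> k * trimmed (K k) (m k) (p k) (D k *\<^sub>v v - c k)" t d]
  show ?thesis unfolding objective_def S blk_emb_same[OF x lL d] by (simp add: algebra_simps)
qed

lemma vec_eq_from_minus:
  fixes a b :: "real vec"
  assumes "a \<in> carrier_vec M" "b \<in> carrier_vec M" "a - b = 0\<^sub>v M"
  shows "a = b"
proof (rule eq_vecI)
  fix i assume "i < dim_vec b"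
  then have "i < M" using assms by simp
  then have "(a - b) $ i = 0" using assms by simp
  moreover have "(a - b) $ i = a $ i - b $ i" using assms(2) \<open>i < M\<close> by (simp add: carrier_vecD)
  ultimately show "a $ i = b $ i" by simp
qed (use assms in simp)

lemma part1:
  fixes f :: "real vec \<Rightarrow> real"
  assumes dl: "\<gamma> l > 0" "p l \<ge> 1" "K l < m l" "c l \<in> carrier_vec (m l * p l)"
      "D l \<in> carrier_mat (m l * p l) (n l)" "D l \<noteq> 0\<^sub>m (m l * p l) (n l)"
    and l: "l \<in> {1..L}"
    and fdiff: "dir_differentiable (tot_dim n L) f"
    and stat: "d_stationary (tot_dim n L) (objective L n m p K \<gamma> c D f) xs"
    and xbar: "xbar \<in> carrier_vec (n l)" "D l *\<^sub>v xbar - c l = 0\<^sub>v (m l * p l)"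
    and Gpos: "\<Gamma> > 0"
    and Gbound: "\<forall>d\<in>carrier_vec (n l). norm2 d = 1 \<longrightarrow> dir_deriv f xs (emb n L l d) \<le> \<Gamma>"
    and gam: "\<gamma> l > \<Gamma> / sigma_K (K l) (m l) (p l) (D l)"
  shows "trimmed (K l) (m l) (p l) (D l *\<^sub>v blk n l xs - c l) = 0"
proof (rule ccontr)
  assume nz: "trimmed (K l) (m l) (p l) (D l *\<^sub>v blk n l xs - c l) \<noteq> 0"
  define z where "z = D l *\<^sub>v blk n l xs - c l"
  define T0 where "T0 = trimmed (K l) (m l) (p l) z"
  have T0pos: "T0 > 0" using nz trimmed_nonneg[of "K l" "m l" "p l" z] unfolding T0_def z_def by linarith
  have lL: "l \<le> L" using l by simp
  have xs: "xs \<in> carrier_vec (tot_dim n L)" using stat unfolding d_stationary_def by simp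
  have xl: "blk n l xs \<in> carrier_vec (n l)" by simp
  have z: "z \<in> carrier_vec (m l * p l)" unfolding z_def using dl xl by auto
  obtain \<Lambda> where \<Lambda>: "\<Lambda> \<subseteq> {..<m l}" "card \<Lambda> = m l - K l" "T0 = (\<Sum>i\<in>\<Lambda>. bnorm (p l) z i)"
    using trimmed_attained unfolding T0_def by blast
  define u where "u = xbar - blk n l xs"
  have u: "u \<in> carrier_vec (n l)" unfolding u_def using xbar by simp
  have Dxbar: "D l *\<^sub>v xbar = c l"
    by (rule vec_eq_from_minus[OF _ dl(4) xbar(2)]) (use dl xbar in simp)
  have Du: "D l *\<^sub>v u = - z"
  proof -
    have "D l *\<^sub>v u = D l *\<^sub>v xbar - D l *\<^sub>v blk n l xs"
      unfolding u_def by (rule mult_minus_distrib_mat_vec[OF dl(5) xbar(1) xl])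
    then show ?thesis unfolding z_def Dxbar using dl xl by (intro eq_vecI) auto
  qed
  obtain d where d: "d \<in> carrier_vec (n l)"
      "\<forall>i\<in>\<Lambda>. \<forall>j<p l. (D l *\<^sub>v d) $ (i * p l + j) = - z $ (i * p l + j)"
      and sig: "sigma_K (K l) (m l) (p l) (D l) > 0" "sigma_K (K l) (m l) (p l) (D l) * norm2 d \<le> T0"
    using direction[OF dl(5) dl(6) dl(2) u z Du \<Lambda> T0pos] by blast
  define \<sigma> where "\<sigma> = sigma_K (K l) (m l) (p l) (D l)"
  have Dd: "D l *\<^sub>v d \<in> carrier_vec (m l * p l)" using dl d by auto
  have dnz: "d \<noteq> 0\<^sub>v (n l)"
  proof
    assume d0: "d = 0\<^sub>v (n l)"
    have "D l *\<^sub>v d = 0\<^sub>v (m l * p l)" unfolding d0 by (rule mat_vec_zero[OF dl(5)])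
    then have zz: "z $ (i * p l + j) = 0" if "i \<in> \<Lambda>" "j < p l" for i j
      using d(2) that R_bound[OF dl(2) \<Lambda>(1), of "i * p l + j"] by force
    have "bnorm (p l) z i = 0" if "i \<in> \<Lambda>" for i unfolding bnorm_def using zz[OF that] by simp
    then have "T0 = 0" using \<Lambda>(3) by simp
    then show False using T0pos by simp
  qed
  define nd where "nd = norm2 d"
  have ndpos: "nd > 0"
  proof -
    have "d \<bullet> d \<noteq> 0" using sprod_self_zero[OF d(1)] dnz by blast
    then have "d \<bullet> d > 0" using sprod_self_nonneg[of d] by linarith
    then show ?thesis unfolding nd_def norm2_sprod by simp
  qed
  define e where "e = emb n L l d"
  have e: "e \<in> carrier_vec (tot_dim n L)" unfolding e_def by simp
  obtain Do where Do: "has_dir_deriv (objective L n m p K \<gamma> c D f) xs e Do"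
    and Dopos: "dir_deriv (objective L n m p K \<gamma> c D f) xs e \<ge> 0"
    using stat e unfolding d_stationary_def by blast
  have Do0: "Do \<ge> 0" using Dopos dir_deriv_eq[OF Do] by simp
  define d' where "d' = (1 / nd) \<cdot>\<^sub>v d"
  have d': "d' \<in> carrier_vec (n l)" unfolding d'_def using d by simp
  have nd': "norm2 d' = 1"
  proof -
    have "d' \<bullet> d' = (1 / nd)\<^sup>2 * (d \<bullet> d)" unfolding d'_def using d by (simp add: power2_eq_square)
    also have "d \<bullet> d = nd\<^sup>2" unfolding nd_def norm2_sprod using sprod_self_nonneg[of d] by simp
    finally have "d' \<bullet> d' = 1" using ndpos by (simp add: power_divide)
    then show ?thesis unfolding norm2_sprod by simp
  qed
  obtain D' where D': "has_dir_deriv f xs (emb n L l d') D'"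
    using fdiff xs unfolding dir_differentiable_def by (meson emb_carrier)
  have D'le: "D' \<le> \<Gamma>" using Gbound d' nd' dir_deriv_eq[OF D'] by auto
  have "has_dir_deriv f xs (nd \<cdot>\<^sub>v emb n L l d') (nd * D')" by (rule has_dir_deriv_smult[OF D' ndpos])
  moreover have "nd \<cdot>\<^sub>v emb n L l d' = e"
  proof -
    have "nd \<cdot>\<^sub>v emb n L l d' = emb n L l (nd \<cdot>\<^sub>v d')" by (rule emb_smult[where d=d' and n=n and l=l and L=L and s=nd, OF d', symmetric])
    also have "nd \<cdot>\<^sub>v d' = d" unfolding d'_def using ndpos by (simp add: smult_smult_assoc)
    finally show ?thesis unfolding e_def .
  qed
  ultimately have Df: "has_dir_deriv f xs e (nd * D')" by simp
  have "Do \<le> nd * D' + (- (\<gamma> l * T0))"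
  proof (rule dir_deriv_bound[OF Do Df, where \<delta>=1])
    show "(0::real) < 1" by simp
    fix t :: real assume t: "0 < t" "t \<le> 1"
    have "objective L n m p K \<gamma> c D f (xs + t \<cdot>\<^sub>v e) - objective L n m p K \<gamma> c D f xs =
      (f (xs + t \<cdot>\<^sub>v e) - f xs) +
      \<gamma> l * (trimmed (K l) (m l) (p l) (D l *\<^sub>v (blk n l xs + t \<cdot>\<^sub>v d) - c l) - T0)"
      unfolding e_def T0_def z_def by (rule obj_diff[OF xs l d(1)])
    also have "D l *\<^sub>v (blk n l xs + t \<cdot>\<^sub>v d) - c l = z + t \<cdot>\<^sub>v (D l *\<^sub>v d)"
    proof -
      have "D l *\<^sub>v (blk n l xs + t \<cdot>\<^sub>v d) = D l *\<^sub>v blk n l xs + t \<cdot>\<^sub>v (D l *\<^sub>v d)"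
        using dl(5) xl d(1) by (simp add: mult_add_distrib_mat_vec mult_mat_vec)
      then show ?thesis unfolding z_def using dl(5) dl(4) xl d(1) by (intro eq_vecI) auto
    qed
    finally have eq: "objective L n m p K \<gamma> c D f (xs + t \<cdot>\<^sub>v e) - objective L n m p K \<gamma> c D f xs =
      (f (xs + t \<cdot>\<^sub>v e) - f xs) + \<gamma> l * (trimmed (K l) (m l) (p l) (z + t \<cdot>\<^sub>v (D l *\<^sub>v d)) - T0)" .
    have "trimmed (K l) (m l) (p l) (z + t \<cdot>\<^sub>v (D l *\<^sub>v d)) \<le> (1 - t) * T0"
      unfolding T0_def
      by (rule trimmed_decrease[OF dl(2) \<Lambda>(1,2) _ z Dd]) (use \<Lambda>(3) d(2) t in \<open>auto simp: T0_def\<close>)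
    then have "\<gamma> l * (trimmed (K l) (m l) (p l) (z + t \<cdot>\<^sub>v (D l *\<^sub>v d)) - T0) \<le> \<gamma> l * (- t * T0)"
      using dl(1) by (intro mult_left_mono) (auto simp: algebra_simps)
    moreover have "\<gamma> l * (- t * T0) = t * (- (\<gamma> l * T0))" by (simp add: algebra_simps)
    ultimately have le1: "objective L n m p K \<gamma> c D f (xs + t \<cdot>\<^sub>v e) - objective L n m p K \<gamma> c D f xs
        \<le> (f (xs + t \<cdot>\<^sub>v e) - f xs) + t * (- (\<gamma> l * T0))" unfolding eq by linarith
    have "(objective L n m p K \<gamma> c D f (xs + t \<cdot>\<^sub>v e) - objective L n m p K \<gamma> c D f xs) / t
        \<le> ((f (xs + t \<cdot>\<^sub>v e) - f xs) + t * (- (\<gamma> l * T0))) / t"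
      by (rule divide_right_mono[OF le1]) (use t in simp)
    also have "\<dots> = (f (xs + t \<cdot>\<^sub>v e) - f xs) / t + - (\<gamma> l * T0)"
      using t by (simp add: diff_divide_distrib)
    finally show "(objective L n m p K \<gamma> c D f (xs + t \<cdot>\<^sub>v e) - objective L n m p K \<gamma> c D f xs) / t
        \<le> (f (xs + t \<cdot>\<^sub>v e) - f xs) / t + - (\<gamma> l * T0)" .
  qed
  moreover have "nd * D' \<le> nd * \<Gamma>" using D'le ndpos by simp
  moreover have "nd * \<Gamma> < \<gamma> l * T0"
  proof -
    have "\<sigma> * nd \<le> T0" using sig unfolding \<sigma>_def nd_def by simp
    then have "nd \<le> T0 / \<sigma>" using sig(1) unfolding \<sigma>_def by (simp add: field_simps)
    then have "nd * \<Gamma> \<le> T0 / \<sigma> * \<Gamma>" using Gpos by (intro mult_right_mono) auto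
    also have "\<dots> = \<Gamma> / \<sigma> * T0" by simp
    also have "\<dots> < \<gamma> l * T0" using gam T0pos unfolding \<sigma>_def by (rule mult_strict_right_mono)
    finally show ?thesis .
  qed
  ultimately have "Do < 0" by linarith
  then show False using Do0 by simp
qed


lemma bnorm1: "bnorm 1 z i = \<bar>z $ i\<bar>"
  unfolding bnorm_def by simp

lemma abs_step:
  fixes a t :: real
  assumes "a \<noteq> 0" "0 \<le> t" "t \<le> \<bar>a\<bar>"
  shows "\<bar>a - t * sgn a\<bar> = \<bar>a\<bar> - t"
  using assms by (cases "a > 0") (auto simp: sgn_if abs_if)

lemma sum_change_one:
  fixes g h :: "nat \<Rightarrow> real"
  assumes "finite A" "i \<in> A" "\<And>j. j \<in> A \<Longrightarrow> j \<noteq> i \<Longrightarrow> g j = h j" "g i = h i - t"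
  shows "sum g A = sum h A - t"
proof -
  have "sum g A = g i + sum g (A - {i})" by (rule sum.remove[OF assms(1,2)])
  also have "sum g (A - {i}) = sum h (A - {i})" by (rule sum.cong) (use assms(3) in auto)
  also have "sum h A = h i + sum h (A - {i})" by (rule sum.remove[OF assms(1,2)])
  ultimately show ?thesis using assms(4) by simp
qed

lemma part2:
  fixes g :: "real vec \<Rightarrow> real" and \<eta> :: "nat \<Rightarrow> real"
  assumes gl: "\<gamma> l > 0" and l: "l \<in> {1..L}"
    and pl: "p l = 1" and ml: "m l = n l" and Dl: "D l = 1\<^sub>m (n l)" and cl: "c l = 0\<^sub>v (n l)"
    and eta: "\<forall>k\<in>{1..L}. \<eta> k \<ge> 0"
    and gdiff: "dir_differentiable (tot_dim n L) g"
    and stat: "d_stationary (tot_dim n L)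
         (objective L n m p K \<gamma> c D (\<lambda>x. g x + (\<Sum>k\<in>{1..L}. \<eta> k * norm1 (blk n k x)))) xs"
    and Gb: "\<forall>d\<in>carrier_vec (n l). (\<forall>i<n l. d $ i \<in> {-1, 0, 1}) \<and> norm1 d = 1 \<longrightarrow>
           dir_deriv g xs (emb n L l d) - \<eta> l \<le> \<Gamma>"
    and gam: "\<gamma> l > \<Gamma>"
  shows "trimmed (K l) (n l) 1 (blk n l xs) = 0"
proof (rule ccontr)
  define N where "N = n l"
  define x where "x = blk n l xs"
  define f where "f = (\<lambda>x. g x + (\<Sum>k\<in>{1..L}. \<eta> k * norm1 (blk n k x)))"
  define T0 where "T0 = trimmed (K l) N 1 x"
  assume "trimmed (K l) (n l) 1 (blk n l xs) \<noteq> 0"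
  then have T0pos: "T0 > 0" using trimmed_nonneg[of "K l" N 1 x] unfolding T0_def x_def N_def by linarith
  have lL: "l \<le> L" using l by simp
  have xs: "xs \<in> carrier_vec (tot_dim n L)" using stat unfolding d_stationary_def by simp
  have x: "x \<in> carrier_vec N" unfolding x_def N_def by simp
  obtain \<Lambda> where \<Lambda>: "\<Lambda> \<subseteq> {..<N}" "card \<Lambda> = N - K l" "T0 = (\<Sum>i\<in>\<Lambda>. \<bar>x $ i\<bar>)"
    using trimmed_attained[of N "K l" 1 x] unfolding T0_def bnorm1 by blast
  have finL: "finite \<Lambda>" using \<Lambda>(1) finite_subset by blast
  obtain i where i: "i \<in> \<Lambda>" "x $ i \<noteq> 0"
  proof -
    have "\<exists>i\<in>\<Lambda>. x $ i \<noteq> 0"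
    proof (rule ccontr)
      assume "\<not> ?thesis"
      then have "T0 = 0" using \<Lambda>(3) by simp
      then show False using T0pos by simp
    qed
    then show ?thesis using that by blast
  qed
  have iN: "i < N" using i \<Lambda>(1) by auto
  define s where "s = - sgn (x $ i)"
  define d where "d = s \<cdot>\<^sub>v unit_vec N i"
  have d: "d \<in> carrier_vec N" unfolding d_def by simp
  have dcomp: "d $ j = (if j = i then s else 0)" if "j < N" for j
    unfolding d_def using that iN by simp
  have s1: "\<bar>s\<bar> = 1" "s \<in> {-1, 0, 1}" unfolding s_def using i(2) by (auto simp: sgn_if)
  have dvals: "\<forall>j<n l. d $ j \<in> {-1, 0, 1}" using dcomp s1 unfolding N_def by auto
  have nd: "norm1 d = 1"
  proof -
    have "norm1 d = (\<Sum>j<N. \<bar>d $ j\<bar>)" unfolding norm1_def using d by simp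
    also have "\<dots> = (\<Sum>j<N. if j = i then 1 else 0)" by (rule sum.cong) (use dcomp s1 in auto)
    also have "\<dots> = 1" using iN by simp
    finally show ?thesis .
  qed
  define e where "e = emb n L l d"
  have e: "e \<in> carrier_vec (tot_dim n L)" unfolding e_def by simp
  obtain Do where Do: "has_dir_deriv (objective L n m p K \<gamma> c D f) xs e Do"
    and Dopos: "dir_deriv (objective L n m p K \<gamma> c D f) xs e \<ge> 0"
    using stat e unfolding d_stationary_def f_def by blast
  have Do0: "Do \<ge> 0" using Dopos dir_deriv_eq[OF Do] by simp
  obtain Dg where Dg: "has_dir_deriv g xs e Dg"
    using gdiff xs e unfolding dir_differentiable_def by blast
  have Dgle: "Dg - \<eta> l \<le> \<Gamma>" using Gb d dvals nd dir_deriv_eq[OF Dg] unfolding e_def N_def by auto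
  have etal: "\<eta> l \<ge> 0" using eta l by auto
  have xt: "(x + t \<cdot>\<^sub>v d) $ j = (if j = i then x $ i - t * sgn (x $ i) else x $ j)" if "j < N" for j t
    using that x d dcomp[OF that] unfolding s_def by simp
  have trim_eq: "trimmed (K l) (m l) (p l) (D l *\<^sub>v v - c l) = trimmed (K l) N 1 v"
    if "v \<in> carrier_vec N" for v
  proof -
    have "D l *\<^sub>v v - c l = v" unfolding Dl cl using that unfolding N_def by (intro eq_vecI) auto
    then show ?thesis using pl ml unfolding N_def by simp
  qed
  have "Do \<le> Dg + (- \<eta> l - \<gamma> l)"
  proof (rule dir_deriv_bound[OF Do Dg, where \<delta>="\<bar>x $ i\<bar>"])
    show "0 < \<bar>x $ i\<bar>" using i(2) by simp
    fix t :: real assume t: "0 < t" "t \<le> \<bar>x $ i\<bar>"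
    have blk_t: "blk n l (xs + t \<cdot>\<^sub>v e) = x + t \<cdot>\<^sub>v d"
      unfolding e_def x_def by (rule blk_emb_same[OF xs lL]) (use d in \<open>simp add: N_def\<close>)
    have n1: "norm1 (x + t \<cdot>\<^sub>v d) = norm1 x - t"
    proof -
      have "norm1 (x + t \<cdot>\<^sub>v d) = (\<Sum>j<N. \<bar>(x + t \<cdot>\<^sub>v d) $ j\<bar>)" unfolding norm1_def using x d by simp
      also have "\<dots> = (\<Sum>j<N. \<bar>x $ j\<bar>) - t"
        by (rule sum_change_one) (use iN xt abs_step[OF i(2)] t in auto)
      also have "(\<Sum>j<N. \<bar>x $ j\<bar>) = norm1 x" unfolding norm1_def using x by simp
      finally show ?thesis .
    qed
    have tr: "trimmed (K l) N 1 (x + t \<cdot>\<^sub>v d) \<le> T0 - t"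
    proof -
      have "trimmed (K l) N 1 (x + t \<cdot>\<^sub>v d) \<le> (\<Sum>j\<in>\<Lambda>. bnorm 1 (x + t \<cdot>\<^sub>v d) j)"
        by (rule trimmed_le[OF \<Lambda>(1,2)])
      also have "\<dots> = (\<Sum>j\<in>\<Lambda>. \<bar>x $ j\<bar>) - t" unfolding bnorm1
        by (rule sum_change_one[OF finL i(1)]) (use \<Lambda>(1) xt abs_step[OF i(2)] t iN in auto)
      finally show ?thesis using \<Lambda>(3) by simp
    qed
    have fdiff: "f (xs + t \<cdot>\<^sub>v e) - f xs = (g (xs + t \<cdot>\<^sub>v e) - g xs) + \<eta> l * (norm1 (x + t \<cdot>\<^sub>v d) - norm1 x)"
    proof -
      have S: "(\<Sum>k\<in>{1..L}. \<eta> k * norm1 (blk n k (xs + t \<cdot>\<^sub>v e))) =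
          (\<Sum>k\<in>{1..L}. \<eta> k * norm1 (blk n k xs)) - \<eta> l * norm1 (blk n l xs) + \<eta> l * norm1 (blk n l (xs + t \<cdot>\<^sub>v e))"
        unfolding e_def by (rule sum_blk_diff[OF xs l, of "\<lambda>k v. \<eta> k * norm1 v"])
      show ?thesis unfolding f_def S blk_t x_def by (simp add: algebra_simps)
    qed
    have odiff: "objective L n m p K \<gamma> c D f (xs + t \<cdot>\<^sub>v e) - objective L n m p K \<gamma> c D f xs =
        (f (xs + t \<cdot>\<^sub>v e) - f xs) + \<gamma> l * (trimmed (K l) N 1 (x + t \<cdot>\<^sub>v d) - T0)"
    proof -
      have "objective L n m p K \<gamma> c D f (xs + t \<cdot>\<^sub>v e) - objective L n m p K \<gamma> c D f xs =
        (f (xs + t \<cdot>\<^sub>v e) - f xs) +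
        \<gamma> l * (trimmed (K l) (m l) (p l) (D l *\<^sub>v (blk n l xs + t \<cdot>\<^sub>v d) - c l)
           - trimmed (K l) (m l) (p l) (D l *\<^sub>v blk n l xs - c l))"
        unfolding e_def by (rule obj_diff[OF xs l]) (use d in \<open>simp add: N_def\<close>)
      also have "trimmed (K l) (m l) (p l) (D l *\<^sub>v (blk n l xs + t \<cdot>\<^sub>v d) - c l) = trimmed (K l) N 1 (x + t \<cdot>\<^sub>v d)"
        unfolding x_def[symmetric] by (rule trim_eq) (use x d in simp)
      also have "trimmed (K l) (m l) (p l) (D l *\<^sub>v blk n l xs - c l) = T0"
        unfolding x_def[symmetric] T0_def by (rule trim_eq[OF x])
      finally show ?thesis .
    qed
    have "\<gamma> l * (trimmed (K l) N 1 (x + t \<cdot>\<^sub>v d) - T0) \<le> \<gamma> l * (- t)"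
      using tr gl by (intro mult_left_mono) auto
    then have le1: "objective L n m p K \<gamma> c D f (xs + t \<cdot>\<^sub>v e) - objective L n m p K \<gamma> c D f xs
        \<le> (g (xs + t \<cdot>\<^sub>v e) - g xs) + t * (- \<eta> l - \<gamma> l)"
      unfolding odiff fdiff n1 by (simp add: algebra_simps)
    have "(objective L n m p K \<gamma> c D f (xs + t \<cdot>\<^sub>v e) - objective L n m p K \<gamma> c D f xs) / t
        \<le> ((g (xs + t \<cdot>\<^sub>v e) - g xs) + t * (- \<eta> l - \<gamma> l)) / t"
      by (rule divide_right_mono[OF le1]) (use t in simp)
    also have "\<dots> = (g (xs + t \<cdot>\<^sub>v e) - g xs) / t + (- \<eta> l - \<gamma> l)"
      using t by (simp add: add_divide_distrib)
    finally show "(objective L n m p K \<gamma> c D f (xs + t \<cdot>\<^sub>v e) - objective L n m p K \<gamma> c D f xs) / t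
        \<le> (g (xs + t \<cdot>\<^sub>v e) - g xs) / t + (- \<eta> l - \<gamma> l)" .
  qed
  then have "Do < 0" using Dgle gam by linarith
  then show False using Do0 by simp
qed


theorem mainTheorem4:
  fixes L :: nat and n m p K :: "nat \<Rightarrow> nat" and \<gamma> :: "nat \<Rightarrow> real"
    and c :: "nat \<Rightarrow> real vec" and D :: "nat \<Rightarrow> real mat" and l :: nat
  assumes data: "\<And>k. k \<in> {1..L} \<Longrightarrow>
      \<gamma> k > 0 \<and> p k \<ge> 1 \<and> K k < m k \<and> c k \<in> carrier_vec (m k * p k) \<and>
      D k \<in> carrier_mat (m k * p k) (n k) \<and> D k \<noteq> 0\<^sub>m (m k * p k) (n k)"
    and l: "l \<in> {1..L}"
  shows
   "(\<forall>(f :: real vec \<Rightarrow> real) xs \<Gamma>.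
       dir_differentiable (tot_dim n L) f \<and>
       d_stationary (tot_dim n L) (objective L n m p K \<gamma> c D f) xs \<and>
       (\<exists>xbar\<in>carrier_vec (n l). D l *\<^sub>v xbar - c l = 0\<^sub>v (m l * p l)) \<and>
       \<Gamma> > 0 \<and>
       (\<forall>d\<in>carrier_vec (n l). norm2 d = 1 \<longrightarrow> dir_deriv f xs (emb n L l d) \<le> \<Gamma>) \<and>
       \<gamma> l > \<Gamma> / sigma_K (K l) (m l) (p l) (D l)
     \<longrightarrow> trimmed (K l) (m l) (p l) (D l *\<^sub>v blk n l xs - c l) = 0)
  \<and>
   (\<forall>(g :: real vec \<Rightarrow> real) (\<eta> :: nat \<Rightarrow> real) xs \<Gamma>.
       p l = 1 \<and> m l = n l \<and> D l = 1\<^sub>m (n l) \<and> c l = 0\<^sub>v (n l) \<and>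
       (\<forall>k\<in>{1..L}. \<eta> k \<ge> 0) \<and>
       dir_differentiable (tot_dim n L) g \<and>
       d_stationary (tot_dim n L)
         (objective L n m p K \<gamma> c D (\<lambda>x. g x + (\<Sum>k\<in>{1..L}. \<eta> k * norm1 (blk n k x)))) xs \<and>
       (\<forall>d\<in>carrier_vec (n l). (\<forall>i<n l. d $ i \<in> {-1, 0, 1}) \<and> norm1 d = 1 \<longrightarrow>
           dir_deriv g xs (emb n L l d) - \<eta> l \<le> \<Gamma>) \<and>
       \<gamma> l > \<Gamma>
     \<longrightarrow> trimmed (K l) (n l) 1 (blk n l xs) = 0)"
proof (rule conjI)
  have dl: "\<gamma> l > 0" "p l \<ge> 1" "K l < m l" "c l \<in> carrier_vec (m l * p l)"
      "D l \<in> carrier_mat (m l * p l) (n l)" "D l \<noteq> 0\<^sub>m (m l * p l) (n l)"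
    using data[OF l] by auto
  show "\<forall>(f :: real vec \<Rightarrow> real) xs \<Gamma>.
       dir_differentiable (tot_dim n L) f \<and>
       d_stationary (tot_dim n L) (objective L n m p K \<gamma> c D f) xs \<and>
       (\<exists>xbar\<in>carrier_vec (n l). D l *\<^sub>v xbar - c l = 0\<^sub>v (m l * p l)) \<and>
       \<Gamma> > 0 \<and>
       (\<forall>d\<in>carrier_vec (n l). norm2 d = 1 \<longrightarrow> dir_deriv f xs (emb n L l d) \<le> \<Gamma>) \<and>
       \<gamma> l > \<Gamma> / sigma_K (K l) (m l) (p l) (D l)
     \<longrightarrow> trimmed (K l) (m l) (p l) (D l *\<^sub>v blk n l xs - c l) = 0"
  proof (intro allI impI)
    fix f :: "real vec \<Rightarrow> real" and xs \<Gamma>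
    assume H: "dir_differentiable (tot_dim n L) f \<and>
       d_stationary (tot_dim n L) (objective L n m p K \<gamma> c D f) xs \<and>
       (\<exists>xbar\<in>carrier_vec (n l). D l *\<^sub>v xbar - c l = 0\<^sub>v (m l * p l)) \<and>
       \<Gamma> > 0 \<and>
       (\<forall>d\<in>carrier_vec (n l). norm2 d = 1 \<longrightarrow> dir_deriv f xs (emb n L l d) \<le> \<Gamma>) \<and>
       \<gamma> l > \<Gamma> / sigma_K (K l) (m l) (p l) (D l)"
    then obtain xbar where xbar: "xbar \<in> carrier_vec (n l)" "D l *\<^sub>v xbar - c l = 0\<^sub>v (m l * p l)"
      by blast
    show "trimmed (K l) (m l) (p l) (D l *\<^sub>v blk n l xs - c l) = 0"
      by (rule part1[where \<gamma>=\<gamma> and l=l and p=p and K=K and m=m and c=c and D=D and n=n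
            and L=L and f=f and xs=xs and xbar=xbar and \<Gamma>=\<Gamma>]) (use H dl l xbar in blast)+
  qed
next
  have gl: "\<gamma> l > 0" using data[OF l] by auto
  show "\<forall>(g :: real vec \<Rightarrow> real) (\<eta> :: nat \<Rightarrow> real) xs \<Gamma>.
       p l = 1 \<and> m l = n l \<and> D l = 1\<^sub>m (n l) \<and> c l = 0\<^sub>v (n l) \<and>
       (\<forall>k\<in>{1..L}. \<eta> k \<ge> 0) \<and>
       dir_differentiable (tot_dim n L) g \<and>
       d_stationary (tot_dim n L)
         (objective L n m p K \<gamma> c D (\<lambda>x. g x + (\<Sum>k\<in>{1..L}. \<eta> k * norm1 (blk n k x)))) xs \<and>
       (\<forall>d\<in>carrier_vec (n l). (\<forall>i<n l. d $ i \<in> {-1, 0, 1}) \<and> norm1 d = 1 \<longrightarrow>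
           dir_deriv g xs (emb n L l d) - \<eta> l \<le> \<Gamma>) \<and>
       \<gamma> l > \<Gamma>
     \<longrightarrow> trimmed (K l) (n l) 1 (blk n l xs) = 0"
  proof (intro allI impI)
    fix g :: "real vec \<Rightarrow> real" and \<eta> :: "nat \<Rightarrow> real" and xs \<Gamma>
    assume H: "p l = 1 \<and> m l = n l \<and> D l = 1\<^sub>m (n l) \<and> c l = 0\<^sub>v (n l) \<and>
       (\<forall>k\<in>{1..L}. \<eta> k \<ge> 0) \<and>
       dir_differentiable (tot_dim n L) g \<and>
       d_stationary (tot_dim n L)
         (objective L n m p K \<gamma> c D (\<lambda>x. g x + (\<Sum>k\<in>{1..L}. \<eta> k * norm1 (blk n k x)))) xs \<and>
       (\<forall>d\<in>carrier_vec (n l). (\<forall>i<n l. d $ i \<in> {-1, 0, 1}) \<and> norm1 d = 1 \<longrightarrow>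
           dir_deriv g xs (emb n L l d) - \<eta> l \<le> \<Gamma>) \<and>
       \<gamma> l > \<Gamma>"
    show "trimmed (K l) (n l) 1 (blk n l xs) = 0"
      by (rule part2[where \<gamma>=\<gamma> and l=l and L=L and p=p and m=m and n=n and D=D and c=c
            and \<eta>=\<eta> and g=g and K=K and xs=xs and \<Gamma>=\<Gamma>]) (use H gl l in blast)+
  qed
qed

end
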